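(* Let $S = \bigoplus_{d\geq 0} S_d$ be a finitely generated graded $\mathbb{C}$-algebra with $S_0 = \mathbb{C}$ and let $V \subseteq S_1$ be a subspace. The rational map $\varphi_V \colon \operatorname{Proj} S \dashrightarrow \mathbb{P}(V^* )$ is an injective morphism if and only if the morphism of affine cones $\widehat{\varphi}_V \colon \operatorname{Spec} S \to V^*$ is injective.
   Context: Both $\varphi_V$ and $\widehat{\varphi}_V$ are induced by the graded ring homomorphism $\operatorname{Sym}^\bullet V \to S$ extending the inclusion $V\subseteq S_1$, where $\mathbb{P}(V^* ) = \operatorname{Proj}\operatorname{Sym}^\bullet V$ and $V^* = \operatorname{Spec}\operatorname{Sym}^\bullet V$. Injectivity is on points. *)

theory Defs
  imports Main "HOL-Library.Complex_Order" Complex_Main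
begin

text \<open>A commutative ring 'a is made into a C-algebra through a ring homomorphism
  emb :: complex => 'a.  A grading is a family Sd :: nat => 'a set of homogeneous parts.\<close>

definition finsupp :: "(nat \<Rightarrow> 'a::zero) \<Rightarrow> bool" where
  "finsupp f \<longleftrightarrow> finite {d. f d \<noteq> 0}"

definition hom_decomp :: "(nat \<Rightarrow> 'a::comm_ring_1 set) \<Rightarrow> (nat \<Rightarrow> 'a) \<Rightarrow> bool" where
  "hom_decomp Sd f \<longleftrightarrow> finsupp f \<and> (\<forall>d. f d \<in> Sd d)"

definition hsum :: "(nat \<Rightarrow> 'a::comm_ring_1) \<Rightarrow> 'a" where
  "hsum f = (\<Sum>d\<in>{d. f d \<noteq> 0}. f d)"

definition C_subspace :: "(complex \<Rightarrow> 'a::comm_ring_1) \<Rightarrow> 'a set \<Rightarrow> bool" where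
  "C_subspace emb W \<longleftrightarrow> 0 \<in> W \<and> (\<forall>x\<in>W. \<forall>y\<in>W. x + y \<in> W) \<and> (\<forall>c. \<forall>x\<in>W. emb c * x \<in> W)"

definition alg_gen :: "(complex \<Rightarrow> 'a::comm_ring_1) \<Rightarrow> 'a set \<Rightarrow> 'a set" where
  "alg_gen emb G = \<Inter> {T. range emb \<subseteq> T \<and> G \<subseteq> T \<and>
      (\<forall>x\<in>T. \<forall>y\<in>T. x + y \<in> T \<and> x * y \<in> T \<and> - x \<in> T)}"

definition fg_graded_C_algebra ::
  "(complex \<Rightarrow> 'a::comm_ring_1) \<Rightarrow> (nat \<Rightarrow> 'a set) \<Rightarrow> bool" where
  "fg_graded_C_algebra emb Sd \<longleftrightarrow>
     \<comment> \<open>emb is an injective ring homomorphism C -> S\<close>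
     emb 1 = 1 \<and> (\<forall>a b. emb (a + b) = emb a + emb b) \<and> (\<forall>a b. emb (a * b) = emb a * emb b)
     \<and> inj emb
     \<comment> \<open>homogeneous parts are C-subspaces, multiplicative grading\<close>
     \<and> (\<forall>d. C_subspace emb (Sd d))
     \<and> (\<forall>d e. \<forall>x\<in>Sd d. \<forall>y\<in>Sd e. x * y \<in> Sd (d + e))
     \<comment> \<open>S is the direct sum of the Sd\<close>
     \<and> (\<forall>x. \<exists>f. hom_decomp Sd f \<and> x = hsum f)
     \<and> (\<forall>f. hom_decomp Sd f \<and> hsum f = 0 \<longrightarrow> (\<forall>d. f d = 0))
     \<comment> \<open>S_0 = C\<close>
     \<and> Sd 0 = range emb
     \<comment> \<open>finitely generated as a C-algebra\<close>
     \<and> (\<exists>G. finite G \<and> alg_gen emb G = UNIV)"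

definition is_ideal :: "'a::comm_ring_1 set \<Rightarrow> bool" where
  "is_ideal I \<longleftrightarrow> 0 \<in> I \<and> (\<forall>x\<in>I. \<forall>y\<in>I. x + y \<in> I) \<and> (\<forall>x\<in>I. \<forall>r. r * x \<in> I)"

definition is_prime_ideal :: "'a::comm_ring_1 set \<Rightarrow> bool" where
  "is_prime_ideal P \<longleftrightarrow> is_ideal P \<and> P \<noteq> UNIV \<and> (\<forall>a b. a * b \<in> P \<longrightarrow> a \<in> P \<or> b \<in> P)"

definition Spec_pts :: "'a::comm_ring_1 set set" where
  "Spec_pts = {P. is_prime_ideal P}"

definition homogeneous_ideal :: "(nat \<Rightarrow> 'a::comm_ring_1 set) \<Rightarrow> 'a set \<Rightarrow> bool" where
  "homogeneous_ideal Sd I \<longleftrightarrow> (\<forall>f. hom_decomp Sd f \<and> hsum f \<in> I \<longrightarrow> (\<forall>d. f d \<in> I))"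

definition irrelevant_ideal :: "(nat \<Rightarrow> 'a::comm_ring_1 set) \<Rightarrow> 'a set" where
  "irrelevant_ideal Sd = {x. \<exists>f. hom_decomp Sd f \<and> f 0 = 0 \<and> x = hsum f}"

definition Proj_pts :: "(nat \<Rightarrow> 'a::comm_ring_1 set) \<Rightarrow> 'a set set" where
  "Proj_pts Sd = {P. is_prime_ideal P \<and> homogeneous_ideal Sd P \<and> \<not> irrelevant_ideal Sd \<subseteq> P}"

text \<open>The map on points induced by Sym V -> S, expressed as contraction of a prime of S
  to the image subalgebra C[V] of Sym V in S (the map Spec C[V] -> Spec Sym V induced by
  the surjection Sym V -> C[V] is injective, identifying a prime with its preimage).
  The same map on homogeneous primes gives phi_V on the points of Proj S where it is
  defined, namely those P with V not contained in P.\<close>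
definition contract_V :: "(complex \<Rightarrow> 'a::comm_ring_1) \<Rightarrow> 'a set \<Rightarrow> 'a set \<Rightarrow> 'a set" where
  "contract_V emb V P = P \<inter> alg_gen emb V"

text \<open>phi_V is an (everywhere defined) morphism and injective on points.\<close>
definition phiV_injective_morphism ::
  "(complex \<Rightarrow> 'a::comm_ring_1) \<Rightarrow> (nat \<Rightarrow> 'a set) \<Rightarrow> 'a set \<Rightarrow> bool" where
  "phiV_injective_morphism emb Sd V \<longleftrightarrow>
     (\<forall>P\<in>Proj_pts Sd. \<not> V \<subseteq> P) \<and> inj_on (contract_V emb V) (Proj_pts Sd)"

definition phiV_hat_injective :: "(complex \<Rightarrow> 'a::comm_ring_1) \<Rightarrow> 'a set \<Rightarrow> bool" where
  "phiV_hat_injective emb V \<longleftrightarrow> inj_on (contract_V emb V) Spec_pts"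

end

theory Submission
  imports Defs "HOL-Computational_Algebra.Polynomial"
    "HOL-Computational_Algebra.Fundamental_Theorem_Algebra"
    "HOL-Library.Countable_Set" "HOL-Analysis.Continuum_Not_Denumerable"
begin



lemma map_poly_hom_add:
  fixes f :: "'a::comm_ring_1 \<Rightarrow> 'b::comm_ring_1"
  assumes "f 0 = 0" "\<And>x y. f (x + y) = f x + f y"
  shows "map_poly f (p + q) = map_poly f p + map_poly f q"
  by (rule poly_eqI) (simp add: coeff_map_poly assms)

lemma map_poly_hom_smult:
  fixes f :: "'a::comm_ring_1 \<Rightarrow> 'b::comm_ring_1"
  assumes "f 0 = 0" "\<And>x y. f (x * y) = f x * f y"
  shows "map_poly f (smult a p) = smult (f a) (map_poly f p)"
  by (rule poly_eqI) (simp add: coeff_map_poly assms)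

lemma map_poly_hom_mult:
  fixes f :: "'a::comm_ring_1 \<Rightarrow> 'b::comm_ring_1"
  assumes "f 0 = 0" "\<And>x y. f (x + y) = f x + f y" "\<And>x y. f (x * y) = f x * f y"
  shows "map_poly f (p * q) = map_poly f p * map_poly f q"
proof (induction p)
  case 0
  then show ?case by simp
next
  case (pCons a p)
  have "map_poly f (pCons a p * q) = map_poly f (smult a q + pCons 0 (p * q))"
    by simp
  also have "\<dots> = smult (f a) (map_poly f q) + pCons 0 (map_poly f p * map_poly f q)"
    by (simp add: map_poly_hom_add map_poly_hom_smult assms map_poly_pCons pCons)
  also have "\<dots> = map_poly f (pCons a p) * map_poly f q"
    by (simp add: map_poly_pCons assms)
  finally show ?case .
qed



definition graded :: "(nat \<Rightarrow> 'a::comm_ring_1 set) \<Rightarrow> 'a poly \<Rightarrow> bool" where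
  "graded Sd p \<longleftrightarrow> (\<forall>d. coeff p d \<in> Sd d)"

locale gca =
  fixes emb :: "complex \<Rightarrow> 'a::comm_ring_1" and Sd :: "nat \<Rightarrow> 'a set"
  assumes fg: "fg_graded_C_algebra emb Sd"
begin

lemma emb_1[simp]: "emb 1 = 1" and emb_add[simp]: "emb (a + b) = emb a + emb b"
  and emb_mult[simp]: "emb (a * b) = emb a * emb b" and emb_inj: "inj emb"
  and sub: "C_subspace emb (Sd d)"
  and Smult: "x \<in> Sd d \<Longrightarrow> y \<in> Sd e \<Longrightarrow> x * y \<in> Sd (d + e)"
  and dec_ex: "\<exists>f. hom_decomp Sd f \<and> x = hsum f"
  and dec_un: "hom_decomp Sd f \<Longrightarrow> hsum f = 0 \<Longrightarrow> f d = 0"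
  and S0: "Sd 0 = range emb"
  and fgen: "\<exists>G. finite G \<and> alg_gen emb G = UNIV"
  using fg unfolding fg_graded_C_algebra_def by blast+

lemma emb_0[simp]: "emb 0 = 0"
proof -
  have "emb (0 + 0) = emb 0 + emb 0" by (rule emb_add)
  then show ?thesis by simp
qed

lemma emb_uminus[simp]: "emb (- a) = - emb a"
proof -
  have "emb (a + - a) = emb a + emb (- a)" by (rule emb_add)
  then have "emb a + emb (- a) = 0" by simp
  then show ?thesis by (metis minus_unique)
qed

lemma emb_diff[simp]: "emb (a - b) = emb a - emb b"
  using emb_add[of a "-b"] by simp

lemma emb_eq_iff[simp]: "emb a = emb b \<longleftrightarrow> a = b"
  using emb_inj by (auto dest: injD)

lemma emb_eq_0_iff[simp]: "emb a = 0 \<longleftrightarrow> a = 0"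
  using emb_eq_iff[of a 0] by simp

lemma emb_inverse: "c \<noteq> 0 \<Longrightarrow> emb c * emb (inverse c) = 1"
  by (metis emb_1 emb_mult right_inverse)

lemma emb_power[simp]: "emb (c ^ n) = emb c ^ n"
  by (induction n) auto

lemma emb_sum: "emb (sum f A) = (\<Sum>a\<in>A. emb (f a))"
  by (induction A rule: infinite_finite_induct) auto

lemma emb_prod: "emb (prod f A) = (\<Prod>a\<in>A. emb (f a))"
  by (induction A rule: infinite_finite_induct) auto

lemma Sd_0: "0 \<in> Sd d" and Sd_add: "x \<in> Sd d \<Longrightarrow> y \<in> Sd d \<Longrightarrow> x + y \<in> Sd d"
  and Sd_smult: "x \<in> Sd d \<Longrightarrow> emb c * x \<in> Sd d"
  using sub[of d] unfolding C_subspace_def by auto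

lemma Sd_uminus: "x \<in> Sd d \<Longrightarrow> - x \<in> Sd d"
proof -
  assume "x \<in> Sd d"
  then have "emb (- 1) * x \<in> Sd d" by (rule Sd_smult)
  then show ?thesis by simp
qed

lemma Sd_diff: "x \<in> Sd d \<Longrightarrow> y \<in> Sd d \<Longrightarrow> x - y \<in> Sd d"
proof -
  assume "x \<in> Sd d" "y \<in> Sd d"
  then have "x + - y \<in> Sd d" using Sd_add Sd_uminus by blast
  then show ?thesis by simp
qed

lemma Sd_sum: "(\<And>i. i \<in> I \<Longrightarrow> f i \<in> Sd d) \<Longrightarrow> sum f I \<in> Sd d"
  by (induction I rule: infinite_finite_induct) (auto intro: Sd_0 Sd_add)

lemma Sd_1: "1 \<in> Sd 0"
proof -
  have "emb 1 \<in> range emb" by (rule rangeI)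
  then show ?thesis using S0 by simp
qed

lemma Sd_power: "x \<in> Sd 1 \<Longrightarrow> x ^ n \<in> Sd n"
  by (induction n) (auto simp: Sd_1 dest: Smult)

lemma Sd_power': "x \<in> Sd e \<Longrightarrow> x ^ n \<in> Sd (n * e)"
proof (induction n)
  case 0 then show ?case by (simp add: Sd_1)
next
  case (Suc n) then show ?case using Smult[of x e "x^n" "n*e"] by (simp add: add.commute)
qed

lemma hsum_eq: "finite D \<Longrightarrow> {d. f d \<noteq> 0} \<subseteq> D \<Longrightarrow> hsum f = sum f D"
  unfolding hsum_def by (rule sum.mono_neutral_left) auto

lemma graded_diff: "graded Sd p \<Longrightarrow> graded Sd q \<Longrightarrow> graded Sd (p - q)"
  by (auto simp: graded_def Sd_diff)
lemma graded_add: "graded Sd p \<Longrightarrow> graded Sd q \<Longrightarrow> graded Sd (p + q)"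
  by (auto simp: graded_def Sd_add)

lemma graded_mult: assumes "graded Sd p" "graded Sd q" shows "graded Sd (p * q)"
  unfolding graded_def coeff_mult
proof
  fix d show "(\<Sum>i\<le>d. coeff p i * coeff q (d - i)) \<in> Sd d"
  proof (intro Sd_sum)
    fix i assume "i \<in> {..d}"
    then have "coeff p i * coeff q (d - i) \<in> Sd (i + (d - i))"
      using assms Smult unfolding graded_def by blast
    then show "coeff p i * coeff q (d - i) \<in> Sd d" using \<open>i \<in> {..d}\<close> by simp
  qed
qed

lemma graded_smult: "graded Sd p \<Longrightarrow> graded Sd (smult (emb c) p)"
  by (auto simp: graded_def Sd_smult)

lemma poly1_eq: "poly (p::'a poly) 1 = (\<Sum>i\<le>degree p. coeff p i)"
  unfolding poly_altdef by simp

lemma hom_decomp_graded: "graded Sd p \<Longrightarrow> hom_decomp Sd (coeff p) \<and> hsum (coeff p) = poly p 1"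
proof -
  assume g: "graded Sd p"
  have fin: "{d. coeff p d \<noteq> 0} \<subseteq> {..degree p}"
    by (auto intro: le_degree)
  then have "finite {d. coeff p d \<noteq> 0}" using finite_subset by blast
  moreover have "hsum (coeff p) = sum (coeff p) {..degree p}"
    by (rule hsum_eq) (use fin in auto)
  ultimately show ?thesis using g
    by (auto simp: hom_decomp_def finsupp_def graded_def poly1_eq)
qed

lemma graded_ex: "\<exists>p. graded Sd p \<and> poly p 1 = x"
proof -
  obtain f where f: "hom_decomp Sd f" "x = hsum f" using dec_ex by blast
  have fin: "finite {d. f d \<noteq> 0}" using f by (simp add: hom_decomp_def finsupp_def)
  then have ev: "\<forall>\<^sub>\<infinity> n. f n = 0" by (simp add: MOST_iff_cofinite)
  define p where "p = Abs_poly f"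
  have cp: "coeff p = f" unfolding p_def using ev by (simp add: Abs_poly_inverse)
  have g: "graded Sd p" using f cp by (simp add: graded_def hom_decomp_def)
  show ?thesis using hom_decomp_graded[OF g] f cp g by auto
qed

lemma graded_unique: assumes "graded Sd p" "graded Sd q" "poly p 1 = poly q 1" shows "p = q"
proof -
  have g: "graded Sd (p - q)" using assms graded_diff by blast
  have "poly (p - q) 1 = 0" using assms by simp
  then have "coeff (p - q) d = 0" for d using hom_decomp_graded[OF g] dec_un by metis
  then show ?thesis by (metis eq_iff_diff_eq_0 poly_eqI zero_poly.rep_eq)
qed

definition cp :: "'a \<Rightarrow> 'a poly" where
  "cp x = (THE p. graded Sd p \<and> poly p 1 = x)"

lemma cp: "graded Sd (cp x)" "poly (cp x) 1 = x"
proof -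
  have "\<exists>!p. graded Sd p \<and> poly p 1 = x" using graded_ex graded_unique by blast
  then have "graded Sd (cp x) \<and> poly (cp x) 1 = x" unfolding cp_def by (rule theI')
  then show "graded Sd (cp x)" "poly (cp x) 1 = x" by auto
qed

lemma cp_eqI: "graded Sd p \<Longrightarrow> poly p 1 = x \<Longrightarrow> cp x = p"
  using cp graded_unique by blast

lemma cp_add[simp]: "cp (x + y) = cp x + cp y"
  by (rule cp_eqI) (auto simp: cp graded_add)
lemma cp_mult[simp]: "cp (x * y) = cp x * cp y"
  by (rule cp_eqI) (auto simp: cp graded_mult)
lemma cp_diff[simp]: "cp (x - y) = cp x - cp y"
  by (rule cp_eqI) (auto simp: cp graded_diff)
lemma cp_smult: "cp (emb c * x) = smult (emb c) (cp x)"
  by (rule cp_eqI) (auto simp: cp graded_smult)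
lemma cp_hom: assumes "x \<in> Sd e" shows "cp x = monom x e"
  by (rule cp_eqI) (auto simp: graded_def coeff_monom assms Sd_0 poly_monom)
lemma cp_0[simp]: "cp 0 = 0"
  using cp_hom[OF Sd_0[of 0]] by simp
lemma cp_uminus[simp]: "cp (- x) = - cp x"
  using cp_diff[of 0 x] by simp
lemma cp_1[simp]: "cp 1 = 1"
  using cp_hom[OF Sd_1] by (simp add: one_pCons monom_0)
lemma cp_emb: "cp (emb c) = [:emb c:]"
  using cp_hom[of "emb c" 0] S0 by (simp add: monom_0)
lemma cp_sum: "cp (sum f I) = (\<Sum>i\<in>I. cp (f i))"
  by (induction I rule: infinite_finite_induct) auto
lemma cp_prod: "cp (prod f I) = (\<Prod>i\<in>I. cp (f i))"
  by (induction I rule: infinite_finite_induct) auto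
lemma cp_power: "cp (x ^ n) = cp x ^ n"
  by (induction n) auto

definition comp :: "nat \<Rightarrow> 'a \<Rightarrow> 'a" where "comp d x = coeff (cp x) d"

lemma comp_in: "comp d x \<in> Sd d" using cp(1) by (simp add: comp_def graded_def)
lemma comp_sum_eq: "x = (\<Sum>d\<le>degree (cp x). comp d x)"
  using cp(2)[of x] by (simp add: poly1_eq comp_def)

lemma comp_unique: "hom_decomp Sd f \<Longrightarrow> hsum f = x \<Longrightarrow> comp d x = f d"
proof -
  assume f: "hom_decomp Sd f" "hsum f = x"
  have fin: "finite {d. f d \<noteq> 0}" using f by (simp add: hom_decomp_def finsupp_def)
  then have ev: "\<forall>\<^sub>\<infinity> n. f n = 0" by (simp add: MOST_iff_cofinite)
  define p where "p = Abs_poly f"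
  have cpp: "coeff p = f" unfolding p_def using ev by (simp add: Abs_poly_inverse)
  have g: "graded Sd p" using f cpp by (simp add: graded_def hom_decomp_def)
  have "poly p 1 = x" using hom_decomp_graded[OF g] f cpp by simp
  then have "cp x = p" using cp_eqI g by blast
  then show ?thesis by (simp add: comp_def cpp)
qed

end


definition is_char :: "(complex \<Rightarrow> 'a::comm_ring_1) \<Rightarrow> ('a \<Rightarrow> complex) \<Rightarrow> bool" where
  "is_char emb \<chi> \<longleftrightarrow> (\<forall>x y. \<chi> (x + y) = \<chi> x + \<chi> y \<and> \<chi> (x * y) = \<chi> x * \<chi> y)
     \<and> (\<forall>c. \<chi> (emb c) = c)"

definition idl :: "'a::comm_ring_1 set \<Rightarrow> 'a set" where
  "idl X = \<Inter> {I. is_ideal I \<and> X \<subseteq> I}"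

lemma is_ideal_idl: "is_ideal (idl X)"
  unfolding idl_def is_ideal_def by auto

lemma idl_sub: "X \<subseteq> idl X"
  unfolding idl_def by auto

lemma idl_least: "is_ideal I \<Longrightarrow> X \<subseteq> I \<Longrightarrow> idl X \<subseteq> I"
  unfolding idl_def by auto

lemma ideal_uminus: "is_ideal I \<Longrightarrow> x \<in> I \<Longrightarrow> - x \<in> I"
  unfolding is_ideal_def by (metis mult_minus1)

lemma ideal_diff: "is_ideal I \<Longrightarrow> x \<in> I \<Longrightarrow> y \<in> I \<Longrightarrow> x - y \<in> I"
proof -
  assume a: "is_ideal I" "x \<in> I" "y \<in> I"
  then have "x + - y \<in> I" using ideal_uminus[OF a(1) a(3)] unfolding is_ideal_def by blast
  then show ?thesis by simp
qed

lemma ideal_multR: "is_ideal I \<Longrightarrow> x \<in> I \<Longrightarrow> x * r \<in> I"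
  unfolding is_ideal_def by (metis mult.commute)
lemma ideal_multL: "is_ideal I \<Longrightarrow> x \<in> I \<Longrightarrow> r * x \<in> I"
  unfolding is_ideal_def by blast
lemma ideal_add: "is_ideal I \<Longrightarrow> x \<in> I \<Longrightarrow> y \<in> I \<Longrightarrow> x + y \<in> I"
  unfolding is_ideal_def by blast
lemma ideal_0: "is_ideal I \<Longrightarrow> 0 \<in> I"
  unfolding is_ideal_def by blast
lemma ideal_sum: "is_ideal I \<Longrightarrow> (\<And>i. i \<in> A \<Longrightarrow> f i \<in> I) \<Longrightarrow> sum f A \<in> I"
  by (induction A rule: infinite_finite_induct) (auto intro: ideal_0 ideal_add)

lemma ideal_UNIV: "is_ideal I \<Longrightarrow> 1 \<in> I \<Longrightarrow> I = UNIV"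
  unfolding is_ideal_def by (metis UNIV_eq_I mult.right_neutral)

lemma prime_power: "is_prime_ideal P \<Longrightarrow> x ^ n \<in> P \<Longrightarrow> n > 0 \<Longrightarrow> x \<in> P"
proof (induction n)
  case 0 then show ?case by simp
next
  case (Suc n) then show ?case unfolding is_prime_ideal_def
    by (cases "n = 0") auto
qed

lemma prime_not_power: "is_prime_ideal P \<Longrightarrow> s \<notin> P \<Longrightarrow> s ^ k \<notin> P"
proof (cases "k = 0")
  case True
  assume "is_prime_ideal P"
  then show ?thesis using True ideal_UNIV unfolding is_prime_ideal_def by auto
next
  case False
  assume "is_prime_ideal P" "s \<notin> P"
  then show ?thesis using False prime_power by blast
qed

lemma zorn_prime:
  fixes I :: "'a::comm_ring_1 set"
  assumes I: "is_ideal I" and s: "\<forall>k. s ^ k \<notin> I"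
  shows "\<exists>M. is_prime_ideal M \<and> I \<subseteq> M \<and> (\<forall>k. s ^ k \<notin> M)
           \<and> (\<forall>x. x \<notin> M \<longrightarrow> (\<exists>y k. x * y - s ^ k \<in> M))"
proof -
  define \<A> where "\<A> = {J. is_ideal J \<and> I \<subseteq> J \<and> (\<forall>k. s ^ k \<notin> J)}"
  have "\<exists>M\<in>\<A>. \<forall>X\<in>\<A>. M \<subseteq> X \<longrightarrow> X = M"
  proof (rule subset_Zorn_nonempty)
    show "\<A> \<noteq> {}" using I s unfolding \<A>_def by blast
  next
    fix \<C> assume C: "\<C> \<noteq> {}" "subset.chain \<A> \<C>"
    then have sub: "\<C> \<subseteq> \<A>" and ch: "\<forall>X\<in>\<C>. \<forall>Y\<in>\<C>. X \<subseteq> Y \<or> Y \<subseteq> X"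
      by (auto simp: subset_chain_def)
    have "is_ideal (\<Union>\<C>)"
      unfolding is_ideal_def
    proof (intro conjI ballI allI)
      show "0 \<in> \<Union>\<C>" using C(1) sub unfolding \<A>_def is_ideal_def by blast
    next
      fix x y assume "x \<in> \<Union>\<C>" "y \<in> \<Union>\<C>"
      then obtain X Y where XY: "X \<in> \<C>" "Y \<in> \<C>" "x \<in> X" "y \<in> Y" by blast
      show "x + y \<in> \<Union>\<C>"
      proof (cases "X \<subseteq> Y")
        case True then show ?thesis using XY sub unfolding \<A>_def is_ideal_def by blast
      next
        case False then have "Y \<subseteq> X" using ch XY by blast
        then show ?thesis using XY sub unfolding \<A>_def is_ideal_def by blast
      qed
    next
      fix x r assume "x \<in> \<Union>\<C>"
      then show "r * x \<in> \<Union>\<C>" using sub unfolding \<A>_def is_ideal_def by blast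
    qed
    then show "\<Union>\<C> \<in> \<A>" using C(1) sub unfolding \<A>_def by blast
  qed
  then obtain M where M: "M \<in> \<A>" and max: "\<And>X. X \<in> \<A> \<Longrightarrow> M \<subseteq> X \<Longrightarrow> X = M" by blast
  have Mi: "is_ideal M" and IM: "I \<subseteq> M" and sM: "\<forall>k. s ^ k \<notin> M" using M unfolding \<A>_def by auto
  have fld: "\<exists>y k. x * y - s ^ k \<in> M" if x: "x \<notin> M" for x
  proof -
    define J where "J = {m + x * y | m y. m \<in> M}"
    have Ji: "is_ideal J" unfolding is_ideal_def J_def
    proof (intro conjI ballI allI)
      show "0 \<in> {m + x * y |m y. m \<in> M}" using ideal_0[OF Mi] by (intro CollectI exI[of _ 0]) auto
    next
      fix a b assume "a \<in> {m + x * y |m y. m \<in> M}" "b \<in> {m + x * y |m y. m \<in> M}"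
      then obtain m1 y1 m2 y2 where "a = m1 + x * y1" "b = m2 + x * y2" "m1 \<in> M" "m2 \<in> M" by blast
      then show "a + b \<in> {m + x * y |m y. m \<in> M}"
        using ideal_add[OF Mi, of m1 m2]
        by (intro CollectI exI[of _ "m1 + m2"] exI[of _ "y1 + y2"]) (simp add: algebra_simps)
    next
      fix a r assume "a \<in> {m + x * y |m y. m \<in> M}"
      then obtain m1 y1 where "a = m1 + x * y1" "m1 \<in> M" by blast
      then show "r * a \<in> {m + x * y |m y. m \<in> M}"
        using ideal_multL[OF Mi, of m1 r]
        by (intro CollectI exI[of _ "r * m1"] exI[of _ "r * y1"]) (simp add: algebra_simps)
    qed
    have MJ: "M \<subseteq> J"
    proof
      fix m assume "m \<in> M"
      then have "m = m + x * 0 \<and> m \<in> M" by simp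
      then show "m \<in> J" unfolding J_def by blast
    qed
    have "x = 0 + x * 1 \<and> 0 \<in> M" using ideal_0[OF Mi] by simp
    then have xJ: "x \<in> J" unfolding J_def by blast
    have "J \<notin> \<A>" using max[of J] MJ xJ x by blast
    then obtain k where "s ^ k \<in> J" using Ji IM MJ unfolding \<A>_def by blast
    then obtain m y where "s ^ k = m + x * y" "m \<in> M" unfolding J_def by blast
    then have "x * y - s ^ k = - m" by simp
    moreover have "- m \<in> M" using ideal_uminus[OF Mi \<open>m \<in> M\<close>] .
    ultimately have "x * y - s ^ k \<in> M" by simp
    then show ?thesis by blast
  qed
  have "is_prime_ideal M"
    unfolding is_prime_ideal_def
  proof (intro conjI allI impI)
    show "M \<noteq> UNIV" using sM by auto
  next
    fix a b assume ab: "a * b \<in> M"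
    show "a \<in> M \<or> b \<in> M"
    proof (rule ccontr)
      assume "\<not> (a \<in> M \<or> b \<in> M)"
      then obtain y k z l where "a * y - s ^ k \<in> M" "b * z - s ^ l \<in> M" using fld by blast
      then obtain y k z l where yz: "a * y - s ^ k \<in> M" "b * z - s ^ l \<in> M" by blast
      define m1 where "m1 = a * y - s ^ k"
      define m2 where "m2 = b * z - s ^ l"
      have m: "m1 \<in> M" "m2 \<in> M" "s ^ k = a * y - m1" "s ^ l = b * z - m2"
        using yz unfolding m1_def m2_def by auto
      have eq: "s ^ (k + l) = (a * b) * (y * z) - (a * y * m2 + m1 * (b * z) - m1 * m2)"
        by (simp add: power_add m algebra_simps)
      have P: "(a * b) * (y * z) \<in> M" using ab ideal_multR[OF Mi] by blast
      have Q1: "a * y * m2 \<in> M" using m(2) ideal_multL[OF Mi] by blast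
      have Q2: "m1 * (b * z) \<in> M" using m(1) ideal_multR[OF Mi] by blast
      have Q3: "m1 * m2 \<in> M" using m(1) ideal_multR[OF Mi] by blast
      have Q: "a * y * m2 + m1 * (b * z) - m1 * m2 \<in> M"
        by (intro ideal_diff[OF Mi] ideal_add[OF Mi] Q1 Q2 Q3)
      have "s ^ (k + l) \<in> M" unfolding eq by (rule ideal_diff[OF Mi P Q])
      then show False using sM by blast
    qed
  qed (rule Mi)
  then show ?thesis using IM sM fld by blast
qed

context gca
begin

lemma char_basic:
  assumes "is_char emb \<chi>"
  shows char_add: "\<chi> (x + y) = \<chi> x + \<chi> y" and char_mult: "\<chi> (x * y) = \<chi> x * \<chi> y"
    and char_emb: "\<chi> (emb c) = c"
  using assms unfolding is_char_def by auto

lemma char_0[simp]: "is_char emb \<chi> \<Longrightarrow> \<chi> 0 = 0"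
  using char_emb[of \<chi> 0] by simp
lemma char_1[simp]: "is_char emb \<chi> \<Longrightarrow> \<chi> 1 = 1"
  using char_emb[of \<chi> 1] by simp
lemma char_uminus: "is_char emb \<chi> \<Longrightarrow> \<chi> (- x) = - \<chi> x"
proof -
  assume ch: "is_char emb \<chi>"
  have "\<chi> x + \<chi> (- x) = 0" using char_add[OF ch, of x "- x"] ch by simp
  from minus_unique[OF this] show ?thesis by simp
qed
lemma char_diff: "is_char emb \<chi> \<Longrightarrow> \<chi> (x - y) = \<chi> x - \<chi> y"
  using char_add[of \<chi> x "- y"] char_uminus[of \<chi> y] by simp
lemma char_sum: "is_char emb \<chi> \<Longrightarrow> \<chi> (sum f A) = (\<Sum>a\<in>A. \<chi> (f a))"
  by (induction A rule: infinite_finite_induct) (auto simp: char_add)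
lemma char_smult: "is_char emb \<chi> \<Longrightarrow> \<chi> (emb c * x) = c * \<chi> x"
  by (simp add: char_mult char_emb)
lemma char_power: "is_char emb \<chi> \<Longrightarrow> \<chi> (x ^ n) = \<chi> x ^ n"
  by (induction n) (auto simp: char_mult)

lemma char_kernel: assumes "is_char emb \<chi>" shows "is_prime_ideal {x. \<chi> x = 0}"
proof -
  have "1 \<notin> {x. \<chi> x = 0}" using assms by simp
  then have "{x. \<chi> x = 0} \<noteq> UNIV" by blast
  then show ?thesis unfolding is_prime_ideal_def is_ideal_def using assms
    by (simp add: char_add char_mult)
qed

lemma char_of_prime:
  assumes M: "is_prime_ideal M" and all: "\<forall>x. \<exists>c. x - emb c \<in> M"
  shows "\<exists>\<chi>. is_char emb \<chi> \<and> M = {x. \<chi> x = 0}"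
proof -
  have Mi: "is_ideal M" and MU: "M \<noteq> UNIV" using M unfolding is_prime_ideal_def by auto
  have embM: "emb c \<in> M \<Longrightarrow> c = 0" for c
  proof (rule ccontr)
    assume "emb c \<in> M" "c \<noteq> 0"
    then have "emb c * emb (inverse c) \<in> M" using ideal_multR[OF Mi] by blast
    then have "1 \<in> M" using emb_inverse[OF \<open>c \<noteq> 0\<close>] by simp
    then show False using ideal_UNIV[OF Mi] MU by blast
  qed
  define \<chi> where "\<chi> x = (SOME c. x - emb c \<in> M)" for x
  have chi: "x - emb (\<chi> x) \<in> M" for x unfolding \<chi>_def using all someI_ex by metis
  have uniq: "x - emb c \<in> M \<Longrightarrow> \<chi> x = c" for x c
  proof -
    assume "x - emb c \<in> M"
    then have "(x - emb c) - (x - emb (\<chi> x)) \<in> M" using chi ideal_diff[OF Mi] by blast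
    moreover have "(x - emb c) - (x - emb (\<chi> x)) = emb (\<chi> x - c)" by simp
    ultimately have "emb (\<chi> x - c) \<in> M" by simp
    then have "\<chi> x - c = 0" using embM by blast
    then show ?thesis by simp
  qed
  have "is_char emb \<chi>"
    unfolding is_char_def
  proof (intro conjI allI)
    fix x y
    have "(x - emb (\<chi> x)) + (y - emb (\<chi> y)) \<in> M" using chi ideal_add[OF Mi] by blast
    then show "\<chi> (x + y) = \<chi> x + \<chi> y" by (intro uniq) (simp add: algebra_simps)
    have "(x - emb (\<chi> x)) * y + emb (\<chi> x) * (y - emb (\<chi> y)) \<in> M"
      using chi ideal_add[OF Mi] ideal_multL[OF Mi] ideal_multR[OF Mi] by blast
    then show "\<chi> (x * y) = \<chi> x * \<chi> y" by (intro uniq) (simp add: algebra_simps)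
  next
    fix c show "\<chi> (emb c) = c" by (intro uniq) (simp add: ideal_0[OF Mi])
  qed
  moreover have "M = {x. \<chi> x = 0}"
  proof safe
    fix x assume "x \<in> M"
    then have "x - emb 0 \<in> M" by simp
    then show "\<chi> x = 0" by (rule uniq)
  next
    fix x assume "\<chi> x = 0" then show "x \<in> M" using chi[of x] by simp
  qed
  ultimately show ?thesis by blast
qed

lemma char_decomp: "is_char emb \<chi> \<Longrightarrow> \<chi> x = (\<Sum>d\<le>degree (cp x). \<chi> (comp d x))"
  using comp_sum_eq[of x] char_sum by metis

lemma comp_hom: "x \<in> Sd e \<Longrightarrow> comp d x = (if d = e then x else 0)"
  by (simp add: comp_def cp_hom coeff_monom)

lemma comp_eq_0_big: "d > degree (cp x) \<Longrightarrow> comp d x = 0"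
  by (simp add: comp_def coeff_eq_0)

lemma comp_add: "comp d (x + y) = comp d x + comp d y"
  by (simp add: comp_def)
lemma comp_diff: "comp d (x - y) = comp d x - comp d y"
  by (simp add: comp_def)
lemma comp_smult: "comp d (emb c * x) = emb c * comp d x"
  unfolding comp_def cp_smult by simp
lemma comp_mult: "comp d (x * y) = (\<Sum>i\<le>d. comp i x * comp (d - i) y)"
  by (simp add: comp_def coeff_mult)
lemma comp_emb: "comp d (emb c) = (if d = 0 then emb c else 0)"
  by (simp add: comp_def cp_emb coeff_pCons split: nat.split)
lemma comp_comp: "comp e (comp d x) = (if e = d then comp d x else 0)"
  using comp_hom[OF comp_in] by simp
lemma comp_0_emb: "\<exists>c. comp 0 x = emb c"
  using comp_in[of 0 x] S0 by auto

lemma irrelevant_eq: "irrelevant_ideal Sd = {x. comp 0 x = 0}"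
proof safe
  fix x assume "x \<in> irrelevant_ideal Sd"
  then obtain f where "hom_decomp Sd f" "f 0 = 0" "x = hsum f" unfolding irrelevant_ideal_def by blast
  then show "comp 0 x = 0" using comp_unique by metis
next
  fix x assume "comp 0 x = 0"
  then show "x \<in> irrelevant_ideal Sd" unfolding irrelevant_ideal_def
    using hom_decomp_graded[OF cp(1)] cp(2)[of x]
    by (intro CollectI exI[of _ "coeff (cp x)"]) (auto simp: comp_def)
qed

lemma homogeneous_iff: "homogeneous_ideal Sd I \<longleftrightarrow> (\<forall>x\<in>I. \<forall>d. comp d x \<in> I)"
proof
  assume h: "homogeneous_ideal Sd I"
  show "\<forall>x\<in>I. \<forall>d. comp d x \<in> I"
  proof (intro ballI allI)
    fix x d assume "x \<in> I"
    then show "comp d x \<in> I" using h hom_decomp_graded[OF cp(1)] cp(2)[of x]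
      unfolding homogeneous_ideal_def comp_def by metis
  qed
next
  assume h: "\<forall>x\<in>I. \<forall>d. comp d x \<in> I"
  show "homogeneous_ideal Sd I" unfolding homogeneous_ideal_def
    using h comp_unique by metis
qed

definition Hc :: "('a \<Rightarrow> complex) \<Rightarrow> 'a set" where
  "Hc \<chi> = {x. \<forall>d. \<chi> (comp d x) = 0}"

lemma Hc_phi: "is_char emb \<chi> \<Longrightarrow> x \<in> Hc \<chi> \<longleftrightarrow> map_poly \<chi> (cp x) = 0"
  unfolding Hc_def by (auto simp: poly_eq_iff coeff_map_poly comp_def)

lemma Hc_prime: assumes ch: "is_char emb \<chi>" shows "is_prime_ideal (Hc \<chi>)"
proof -
  have h0: "\<chi> 0 = 0" using ch by simp
  have ha: "\<And>x y. \<chi> (x + y) = \<chi> x + \<chi> y" and hm: "\<And>x y. \<chi> (x * y) = \<chi> x * \<chi> y"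
    using ch char_add char_mult by auto
  have mult: "map_poly \<chi> (cp (x * y)) = map_poly \<chi> (cp x) * map_poly \<chi> (cp y)" for x y
    using map_poly_hom_mult[OF h0 ha hm] by simp
  have add: "map_poly \<chi> (cp (x + y)) = map_poly \<chi> (cp x) + map_poly \<chi> (cp y)" for x y
    using map_poly_hom_add[OF h0 ha] by simp
  show ?thesis unfolding is_prime_ideal_def is_ideal_def
  proof (intro conjI ballI allI impI)
    show "0 \<in> Hc \<chi>" using Hc_phi[OF ch] by simp
    show "Hc \<chi> \<noteq> UNIV" using Hc_phi[OF ch, of 1] ch by (auto simp: map_poly_pCons one_pCons)
  next
    fix x y assume "x \<in> Hc \<chi>" "y \<in> Hc \<chi>" then show "x + y \<in> Hc \<chi>"
      using Hc_phi[OF ch] add by simp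
  next
    fix x r assume "x \<in> Hc \<chi>" then show "r * x \<in> Hc \<chi>"
      using Hc_phi[OF ch] mult by simp
  next
    fix a b assume "a * b \<in> Hc \<chi>" then show "a \<in> Hc \<chi> \<or> b \<in> Hc \<chi>"
      using Hc_phi[OF ch] mult by simp
  qed
qed

lemma Hc_homogeneous: "is_char emb \<chi> \<Longrightarrow> homogeneous_ideal Sd (Hc \<chi>)"
  unfolding homogeneous_iff Hc_def by (auto simp: comp_comp)

lemma Hc_sub_ker: "is_char emb \<chi> \<Longrightarrow> x \<in> Hc \<chi> \<Longrightarrow> \<chi> x = 0"
proof -
  assume ch: "is_char emb \<chi>" and "x \<in> Hc \<chi>"
  then have "\<forall>d. \<chi> (comp d x) = 0" unfolding Hc_def by simp
  then show ?thesis using char_decomp[OF ch, of x] by simp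
qed

end


context gca
begin

sublocale vs: vector_space "\<lambda>c x. emb c * x"
  by unfold_locales (auto simp: algebra_simps)

definition peval :: "'a \<Rightarrow> complex poly \<Rightarrow> 'a" where
  "peval t q = poly (map_poly emb q) t"

lemma peval_add: "peval t (p + q) = peval t p + peval t q"
  unfolding peval_def by (simp add: map_poly_hom_add)
lemma peval_mult: "peval t (p * q) = peval t p * peval t q"
  unfolding peval_def by (simp add: map_poly_hom_mult)
lemma peval_smult: "peval t (smult a p) = emb a * peval t p"
  unfolding peval_def by (simp add: map_poly_hom_smult)
lemma peval_lin: "peval t [:- c, 1:] = t - emb c"
  unfolding peval_def by (simp add: map_poly_pCons)
lemma peval_const: "peval t [:c:] = emb c"
  unfolding peval_def by (simp add: map_poly_pCons)
lemma peval_0[simp]: "peval t 0 = 0"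
  unfolding peval_def by simp
lemma peval_1[simp]: "peval t 1 = 1"
  unfolding peval_def by (simp add: map_poly_pCons one_pCons)
lemma peval_sum: "peval t (sum f A) = (\<Sum>a\<in>A. peval t (f a))"
  by (induction A rule: infinite_finite_induct) (auto simp: peval_add)
lemma peval_prod: "peval t (prod f A) = (\<Prod>a\<in>A. peval t (f a))"
  by (induction A rule: infinite_finite_induct) (auto simp: peval_mult)

lemma emb_notin_ideal:
  assumes M: "is_prime_ideal M" and c: "c \<noteq> 0" shows "emb c \<notin> M"
proof
  assume "emb c \<in> M"
  then have "emb c * emb (inverse c) \<in> M"
    using M unfolding is_prime_ideal_def by (blast intro: ideal_multR)
  then have "1 \<in> M" using emb_inverse[OF c] by simp
  then show False using M ideal_UNIV unfolding is_prime_ideal_def by blast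
qed

lemma peval_nonzero:
  assumes M: "is_prime_ideal M" and tc: "\<forall>c. t - emb c \<notin> M"
  shows "q \<noteq> 0 \<Longrightarrow> peval t q \<notin> M"
proof (induction "degree q" arbitrary: q rule: less_induct)
  case less
  show ?case
  proof (cases "degree q = 0")
    case True
    then have "q = [:coeff q 0:]" by (metis degree_eq_zeroE coeff_pCons_0)
    moreover have "coeff q 0 \<noteq> 0" using less(2) True
      by (metis \<open>q = [:coeff q 0:]\<close> pCons_eq_0_iff)
    ultimately show ?thesis using emb_notin_ideal[OF M] peval_const by metis
  next
    case False
    then have "\<not> constant (poly q)" by (simp add: constant_degree)
    then obtain r where "poly q r = 0" using fundamental_theorem_of_algebra by blast
    then have "[:- r, 1:] dvd q" by (simp add: poly_eq_0_iff_dvd)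
    then obtain q' where q: "q = [:- r, 1:] * q'" by (elim dvdE)
    have q'0: "q' \<noteq> 0" using q less(2) by auto
    have "degree q = degree [:- r, 1:] + degree q'" unfolding q
      using q'0 by (intro degree_mult_eq) auto
    then have "degree q = 1 + degree q'" by simp
    then have "degree q' < degree q" by simp
    then have IH: "peval t q' \<notin> M" using less(1) q'0 by blast
    show ?thesis
    proof
      assume "peval t q \<in> M"
      moreover have "peval t q = (t - emb r) * peval t q'" unfolding q peval_mult peval_lin ..
      ultimately have "(t - emb r) * peval t q' \<in> M" by simp
      then show False using IH tc M unfolding is_prime_ideal_def by blast
    qed
  qed
qed

lemma key_indep:
  assumes M: "is_prime_ideal M" and tc: "\<forall>c. t - emb c \<notin> M"
    and sK: "s ^ K \<notin> M" and fin: "finite C"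
    and y: "\<And>c. c \<in> C \<Longrightarrow> (t - emb c) * y c - s ^ K \<in> M"
    and z: "(\<Sum>c\<in>C. emb (a c) * y c) \<in> M"
  shows "\<forall>c\<in>C. a c = 0"
proof -
  have Mi: "is_ideal M" using M unfolding is_prime_ideal_def by blast
  define pc where "pc c = (\<Prod>c'\<in>C - {c}. [:- c', 1:])" for c
  define p where "p = (\<Sum>c\<in>C. smult (a c) (pc c))"
  define Pc where "Pc c = (\<Prod>c'\<in>C - {c}. t - emb c')" for c
  have Pc: "peval t (pc c) = Pc c" for c unfolding pc_def Pc_def by (simp add: peval_prod peval_lin)
  define T where "T = (\<Prod>c\<in>C. t - emb c)"
  have T: "c \<in> C \<Longrightarrow> T = (t - emb c) * Pc c" for c
    unfolding T_def Pc_def using fin by (simp add: prod.remove)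
  have zT: "(\<Sum>c\<in>C. emb (a c) * y c) * T \<in> M" using z Mi by (rule ideal_multR[rotated])
  have eq1: "(\<Sum>c\<in>C. emb (a c) * y c) * T = (\<Sum>c\<in>C. emb (a c) * ((t - emb c) * y c) * Pc c)"
    unfolding sum_distrib_right
    by (rule sum.cong) (simp_all add: T ac_simps)
  have eq2: "s ^ K * peval t p = (\<Sum>c\<in>C. emb (a c) * s ^ K * Pc c)"
    unfolding p_def peval_sum sum_distrib_left
    by (rule sum.cong) (simp_all add: peval_smult Pc ac_simps)
  have diff: "(\<Sum>c\<in>C. emb (a c) * ((t - emb c) * y c) * Pc c) - (\<Sum>c\<in>C. emb (a c) * s ^ K * Pc c)
      = (\<Sum>c\<in>C. (emb (a c) * Pc c) * ((t - emb c) * y c - s ^ K))"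
    unfolding sum_subtractf[symmetric] by (rule sum.cong) (simp_all add: right_diff_distrib ac_simps)
  have "(\<Sum>c\<in>C. (emb (a c) * Pc c) * ((t - emb c) * y c - s ^ K)) \<in> M"
    by (rule ideal_sum[OF Mi]) (rule ideal_multL[OF Mi y])
  moreover have "(\<Sum>c\<in>C. emb (a c) * ((t - emb c) * y c) * Pc c) \<in> M"
    using zT unfolding eq1 .
  ultimately have "(\<Sum>c\<in>C. emb (a c) * ((t - emb c) * y c) * Pc c) -
     (\<Sum>c\<in>C. (emb (a c) * Pc c) * ((t - emb c) * y c - s ^ K)) \<in> M"
    using ideal_diff[OF Mi] by blast
  moreover have "(\<Sum>c\<in>C. emb (a c) * ((t - emb c) * y c) * Pc c) -
     (\<Sum>c\<in>C. (emb (a c) * Pc c) * ((t - emb c) * y c - s ^ K)) = s ^ K * peval t p"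
    unfolding eq2 diff[symmetric] by simp
  ultimately have "s ^ K * peval t p \<in> M" by simp
  then have "peval t p \<in> M" using sK M unfolding is_prime_ideal_def by blast
  then have p0: "p = 0" using peval_nonzero[OF M tc] by blast
  show ?thesis
  proof
    fix c0 assume c0: "c0 \<in> C"
    have "poly p c0 = (\<Sum>c\<in>C. a c * poly (pc c) c0)"
      unfolding p_def by (simp add: poly_sum)
    also have "\<dots> = a c0 * poly (pc c0) c0 + (\<Sum>c\<in>C - {c0}. a c * poly (pc c) c0)"
      by (rule sum.remove[OF fin c0])
    also have "(\<Sum>c\<in>C - {c0}. a c * poly (pc c) c0) = 0"
    proof (rule sum.neutral, rule ballI)
      fix c assume c: "c \<in> C - {c0}"
      have "poly (pc c) c0 = (\<Prod>c'\<in>C - {c}. c0 - c')" unfolding pc_def by (simp add: poly_prod)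
      also have "\<dots> = 0" using c c0 fin by (intro prod_zero) auto
      finally show "a c * poly (pc c) c0 = 0" by simp
    qed
    finally have "a c0 * poly (pc c0) c0 = 0" using p0 by simp
    moreover have "poly (pc c0) c0 \<noteq> 0" unfolding pc_def using fin by (simp add: poly_prod)
    ultimately show "a c0 = 0" by simp
  qed
qed

end


lemma uncountable_fiber:
  fixes f :: "complex \<Rightarrow> 'b"
  assumes X: "countable X" and f: "\<And>c. f c \<in> X"
  shows "\<exists>x\<in>X. uncountable {c. f c = x}"
proof (rule ccontr)
  assume "\<not> ?thesis"
  then have "\<forall>x\<in>X. countable {c. f c = x}" by blast
  then have "countable (\<Union>x\<in>X. {c. f c = x})" using X by blast
  moreover have "(\<Union>x\<in>X. {c. f c = x}) = UNIV" using f by blast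
  ultimately show False using uncountable_UNIV_complex by simp
qed

context gca
begin

lemma span_monomials:
  "alg_gen emb G \<subseteq> vs.span (prod_list ` lists G)"
proof -
  define B where "B = prod_list ` lists G"
  have BB: "b \<in> B \<Longrightarrow> b' \<in> B \<Longrightarrow> b * b' \<in> B" for b b'
  proof -
    assume "b \<in> B" "b' \<in> B"
    then obtain l l' where "l \<in> lists G" "l' \<in> lists G" "b = prod_list l" "b' = prod_list l'"
      unfolding B_def by blast
    then have "b * b' = prod_list (l @ l') \<and> l @ l' \<in> lists G" by simp
    then show ?thesis unfolding B_def by blast
  qed
  have m1: "b * y \<in> vs.span B" if b: "b \<in> B" and y: "y \<in> vs.span B" for b y
    using y
  proof (induction y rule: vs.span_induct_alt)
    case base then show ?case by (simp add: vs.span_zero)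
  next
    case (step c x y)
    have "b * (emb c * x + y) = emb c * (b * x) + b * y" by (simp add: algebra_simps)
    moreover have "b * x \<in> vs.span B" using BB[OF b step(1)] vs.span_base by blast
    ultimately show ?case using step(2) vs.span_add vs.span_scale by metis
  qed
  have m2: "x * y \<in> vs.span B" if x: "x \<in> vs.span B" and y: "y \<in> vs.span B" for x y
    using x
  proof (induction x rule: vs.span_induct_alt)
    case base then show ?case by (simp add: vs.span_zero)
  next
    case (step c b x)
    have "(emb c * b + x) * y = emb c * (b * y) + x * y" by (simp add: algebra_simps)
    then show ?case using step(2) m1[OF step(1) y] vs.span_add vs.span_scale by metis
  qed
  have one: "1 \<in> B" unfolding B_def by (rule image_eqI[of _ _ "[]"]) auto
  have "vs.span B \<in> {T. range emb \<subseteq> T \<and> G \<subseteq> T \<and>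
      (\<forall>x\<in>T. \<forall>y\<in>T. x + y \<in> T \<and> x * y \<in> T \<and> - x \<in> T)}"
  proof (intro CollectI conjI ballI subsetI)
    fix x assume "x \<in> range emb"
    then obtain c where "x = emb c * 1" by auto
    then show "x \<in> vs.span B" using one vs.span_base vs.span_scale by metis
  next
    fix g assume "g \<in> G"
    then have "g = prod_list [g] \<and> [g] \<in> lists G" by simp
    then have "g \<in> B" unfolding B_def by blast
    then show "g \<in> vs.span B" by (rule vs.span_base)
  next
    fix x y assume "x \<in> vs.span B" "y \<in> vs.span B"
    then show "x + y \<in> vs.span B" "x * y \<in> vs.span B" "- x \<in> vs.span B"
      using vs.span_add m2 vs.span_neg by auto
  qed
  then show ?thesis unfolding alg_gen_def B_def[symmetric] by (rule Inter_lower)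
qed

lemma span_finite_subset:
  assumes "x \<in> vs.span B" shows "\<exists>F. finite F \<and> F \<subseteq> B \<and> x \<in> vs.span F"
proof -
  obtain t r where tr: "x = (\<Sum>a\<in>t. emb (r a) * a)" "finite t" "t \<subseteq> B"
    using assms unfolding vs.span_explicit by blast
  have "x \<in> vs.span t" unfolding tr(1)
    by (intro vs.span_sum vs.span_scale vs.span_base)
  then show ?thesis using tr by blast
qed

lemma weak_NS:
  assumes M: "is_prime_ideal M" and sM: "\<forall>k. s ^ k \<notin> M"
    and fld: "\<forall>x. x \<notin> M \<longrightarrow> (\<exists>y k. x * y - s ^ k \<in> M)"
  shows "\<forall>x. \<exists>c. x - emb c \<in> M"
proof (rule ccontr)
  assume "\<not> (\<forall>x. \<exists>c. x - emb c \<in> M)"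
  then obtain t where tc: "\<forall>c. t - emb c \<notin> M" by blast
  have "\<forall>c. \<exists>y k. (t - emb c) * y - s ^ k \<in> M" using fld tc by blast
  then obtain y k where yk: "\<And>c. (t - emb c) * y c - s ^ (k c) \<in> M" by metis
  obtain G where G: "finite G" "alg_gen emb G = UNIV" using fgen by blast
  define B where "B = prod_list ` lists G"
  have cB: "countable B" unfolding B_def using G(1) by (simp add: countable_finite)
  have "\<forall>c. \<exists>F. finite F \<and> F \<subseteq> B \<and> y c \<in> vs.span F"
    using span_monomials[of G] G(2) span_finite_subset unfolding B_def by blast
  then obtain F where F: "\<And>c. finite (F c) \<and> F c \<subseteq> B \<and> y c \<in> vs.span (F c)" by metis
  define X where "X = (UNIV :: nat set) \<times> {F. finite F \<and> F \<subseteq> B}"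
  have cX: "countable X" unfolding X_def using cB countable_Collect_finite_subset by blast
  have inX: "(k c, F c) \<in> X" for c unfolding X_def using F by blast
  obtain KF where "uncountable {c. (k c, F c) = KF}"
    using uncountable_fiber[of X "\<lambda>c. (k c, F c)"] cX inX by blast
  then obtain K F0 where unc: "uncountable {c. k c = K \<and> F c = F0}"
    by (cases KF) auto
  then have "infinite {c. k c = K \<and> F c = F0}" using uncountable_infinite by blast
  then obtain C where C: "finite C" "card C = card F0 + 1" "C \<subseteq> {c. k c = K \<and> F c = F0}"
    using infinite_arbitrarily_large by blast
  have "C \<noteq> {}" using C(2) by auto
  then obtain c1 where "c1 \<in> C" by blast
  then have finF0: "finite F0" using C(3) F by blast
  have yC: "\<And>c. c \<in> C \<Longrightarrow> (t - emb c) * y c - s ^ K \<in> M" using C(3) yk by auto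
  have ysp: "y ` C \<subseteq> vs.span F0" using C(3) F by blast
  have indep: "\<forall>c\<in>C. a c = 0" if "(\<Sum>c\<in>C. emb (a c) * y c) = 0" for a
  proof (rule key_indep[OF M tc _ C(1) yC])
    show "s ^ K \<notin> M" using sM by blast
    show "(\<Sum>c\<in>C. emb (a c) * y c) \<in> M" using that M
      unfolding is_prime_ideal_def is_ideal_def by simp
  qed
  have inj: "inj_on y C"
  proof (rule inj_onI, rule ccontr)
    fix c1 c2 assume c: "c1 \<in> C" "c2 \<in> C" "y c1 = y c2" "c1 \<noteq> c2"
    define a where "a c = (if c = c1 then 1 else if c = c2 then - 1 else (0::complex))" for c
    have "(\<Sum>c\<in>C. emb (a c) * y c) = (\<Sum>c\<in>{c1, c2}. emb (a c) * y c)"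
      using c C(1) by (intro sum.mono_neutral_right) (auto simp: a_def)
    also have "\<dots> = 0" using c by (simp add: a_def)
    finally have "\<forall>c\<in>C. a c = 0" by (rule indep)
    then show False using c by (auto simp: a_def)
  qed
  have "vs.independent (y ` C)"
  proof
    assume "vs.dependent (y ` C)"
    then obtain u where u: "\<exists>v\<in>y ` C. u v \<noteq> 0" "(\<Sum>v\<in>y ` C. emb (u v) * v) = 0"
      using vs.dependent_finite[of "y ` C"] C(1) by blast
    have "(\<Sum>c\<in>C. emb (u (y c)) * y c) = 0"
      using u(2) by (simp add: sum.reindex[OF inj])
    then have "\<forall>c\<in>C. u (y c) = 0" using indep[of "u \<circ> y"] by simp
    then show False using u(1) by blast
  qed
  then have "card (y ` C) \<le> card F0"
    using vs.independent_span_bound[OF finF0 _ ysp] by blast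
  moreover have "card (y ` C) = card F0 + 1" using card_image[OF inj] C(2) by simp
  ultimately show False by simp
qed

lemma char_exists:
  assumes I: "is_ideal I" and s: "\<forall>k. s ^ k \<notin> I"
  shows "\<exists>\<chi>. is_char emb \<chi> \<and> (\<forall>x\<in>I. \<chi> x = 0) \<and> \<chi> s \<noteq> 0"
proof -
  obtain M where M: "is_prime_ideal M" "I \<subseteq> M" "\<forall>k. s ^ k \<notin> M"
    "\<forall>x. x \<notin> M \<longrightarrow> (\<exists>y k. x * y - s ^ k \<in> M)"
    using zorn_prime[OF I s] by blast
  have "\<forall>x. \<exists>c. x - emb c \<in> M" using weak_NS[OF M(1) M(3) M(4)] .
  then obtain \<chi> where \<chi>: "is_char emb \<chi>" "M = {x. \<chi> x = 0}"
    using char_of_prime[OF M(1)] by blast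
  have "s \<notin> M" using M(3)[rule_format, of 1] by simp
  then show ?thesis using \<chi> M(2) by blast
qed

end


locale gcaV = gca emb Sd for emb :: "complex \<Rightarrow> 'a::comm_ring_1" and Sd +
  fixes V :: "'a set"
  assumes Vsub: "C_subspace emb V" and V1: "V \<subseteq> Sd 1"
begin

abbreviation "A \<equiv> alg_gen emb V"

lemma A_closed: "range emb \<subseteq> A" "V \<subseteq> A"
  "x \<in> A \<Longrightarrow> y \<in> A \<Longrightarrow> x + y \<in> A" "x \<in> A \<Longrightarrow> y \<in> A \<Longrightarrow> x * y \<in> A"
  "x \<in> A \<Longrightarrow> - x \<in> A"
  unfolding alg_gen_def by blast+

lemma A_emb: "emb c \<in> A" using A_closed(1) by blast
lemma A_0: "0 \<in> A" using A_emb[of 0] by simp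
lemma A_1: "1 \<in> A" using A_emb[of 1] by simp
lemma A_diff: "x \<in> A \<Longrightarrow> y \<in> A \<Longrightarrow> x - y \<in> A"
  using A_closed(3)[OF _ A_closed(5)] by (metis diff_conv_add_uminus)
lemma A_sum: "(\<And>i. i \<in> I \<Longrightarrow> f i \<in> A) \<Longrightarrow> sum f I \<in> A"
  by (induction I rule: infinite_finite_induct) (auto intro: A_0 A_closed(3))
lemma A_power: "x \<in> A \<Longrightarrow> x ^ n \<in> A"
  by (induction n) (auto intro: A_1 A_closed(4))

lemma comp_sum: "comp e (sum f I) = (\<Sum>i\<in>I. comp e (f i))"
  by (simp add: comp_def cp_sum coeff_sum)

lemma comp_uminus: "comp d (- x) = - comp d x"
  using comp_diff[of d 0 x] comp_emb[of d 0] by simp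

lemma A_comp: "x \<in> A \<Longrightarrow> comp d x \<in> A"
proof -
  define T where "T = {x. \<forall>d. comp d x \<in> A}"
  have "T \<in> {T. range emb \<subseteq> T \<and> V \<subseteq> T \<and>
      (\<forall>x\<in>T. \<forall>y\<in>T. x + y \<in> T \<and> x * y \<in> T \<and> - x \<in> T)}"
  proof (intro CollectI conjI ballI subsetI)
    fix x assume "x \<in> range emb"
    then show "x \<in> T" unfolding T_def by (auto simp: comp_emb A_emb A_0)
  next
    fix v assume "v \<in> V"
    then have "v \<in> Sd 1" "v \<in> A" using V1 A_closed(2) by auto
    then show "v \<in> T" unfolding T_def by (auto simp: comp_hom A_0)
  next
    fix x y assume xy: "x \<in> T" "y \<in> T"
    show "x + y \<in> T" using xy unfolding T_def by (auto simp: comp_add intro: A_closed(3))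
    show "- x \<in> T" using xy unfolding T_def by (auto simp: comp_uminus intro: A_closed(5))
    show "x * y \<in> T" using xy unfolding T_def
      by (auto simp: comp_mult intro!: A_sum A_closed(4))
  qed
  then have "A \<subseteq> T" unfolding alg_gen_def by (rule Inter_lower)
  moreover assume "x \<in> A"
  ultimately show ?thesis unfolding T_def by blast
qed

lemma Hc_Proj_iff:
  assumes ch: "is_char emb \<chi>"
  shows "Hc \<chi> \<in> Proj_pts Sd \<longleftrightarrow> \<not> irrelevant_ideal Sd \<subseteq> Hc \<chi>"
  unfolding Proj_pts_def using Hc_prime[OF ch] Hc_homogeneous[OF ch] by blast

lemma char_V0:
  assumes a: "\<forall>P\<in>Proj_pts Sd. \<not> V \<subseteq> P"
    and ch: "is_char emb \<chi>" and V0: "\<forall>v\<in>V. \<chi> v = 0"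
  shows "\<chi> x = \<chi> (comp 0 x)"
proof -
  have "V \<subseteq> Hc \<chi>"
  proof
    fix v assume "v \<in> V"
    then have "v \<in> Sd 1" "\<chi> v = 0" using V1 V0 by auto
    then show "v \<in> Hc \<chi>" unfolding Hc_def using ch by (auto simp: comp_hom)
  qed
  then have "Hc \<chi> \<notin> Proj_pts Sd" using a by blast
  then have irr: "irrelevant_ideal Sd \<subseteq> Hc \<chi>" using Hc_Proj_iff[OF ch] by blast
  have "comp 0 (x - comp 0 x) = 0" by (simp add: comp_diff comp_comp)
  then have "x - comp 0 x \<in> Hc \<chi>" using irr irrelevant_eq by blast
  then have "\<chi> (x - comp 0 x) = 0" using Hc_sub_ker[OF ch] by blast
  then show ?thesis using char_diff[OF ch] by simp
qed

lemma closed_point_inj: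
  assumes a: "\<forall>P\<in>Proj_pts Sd. \<not> V \<subseteq> P"
    and b: "inj_on (contract_V emb V) (Proj_pts Sd)"
    and ch: "is_char emb \<chi>" and ch': "is_char emb \<chi>'"
    and agree: "\<forall>x\<in>A. \<chi> x = \<chi>' x"
  shows "\<chi> = \<chi>'"
proof (cases "\<forall>v\<in>V. \<chi> v = 0")
  case True
  have True': "\<forall>v\<in>V. \<chi>' v = 0"
  proof
    fix v assume v: "v \<in> V"
    then have "v \<in> A" using A_closed(2) by blast
    then have "\<chi>' v = \<chi> v" using agree by simp
    then show "\<chi>' v = 0" using True v by simp
  qed
  show ?thesis
  proof
    fix x
    obtain c where c: "comp 0 x = emb c" using comp_0_emb by blast
    have "\<chi> x = c" using char_V0[OF a ch True, of x] c char_emb[OF ch, of c] by simp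
    moreover have "\<chi>' x = c" using char_V0[OF a ch' True', of x] c char_emb[OF ch', of c] by simp
    ultimately show "\<chi> x = \<chi>' x" by simp
  qed
next
  case False
  then obtain v0 where v0: "v0 \<in> V" "\<chi> v0 \<noteq> 0" by blast
  have v0S: "v0 \<in> Sd 1" and v0A: "v0 \<in> A" using v0 V1 A_closed(2) by auto
  have v0': "\<chi>' v0 = \<chi> v0" using agree v0A by simp
  have irr: "v0 \<in> irrelevant_ideal Sd" using v0S irrelevant_eq by (simp add: comp_hom)
  have "v0 \<notin> Hc \<chi>" using v0 v0S unfolding Hc_def by (auto simp: comp_hom)
  then have P1: "Hc \<chi> \<in> Proj_pts Sd" using Hc_Proj_iff[OF ch] irr by blast
  have "v0 \<notin> Hc \<chi>'" using v0 v0S v0' unfolding Hc_def by (auto simp: comp_hom)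
  then have P2: "Hc \<chi>' \<in> Proj_pts Sd" using Hc_Proj_iff[OF ch'] irr by blast
  have "contract_V emb V (Hc \<chi>) = contract_V emb V (Hc \<chi>')"
    unfolding contract_V_def Hc_def using agree A_comp by auto
  then have HH: "Hc \<chi> = Hc \<chi>'" using b P1 P2 by (simp add: inj_on_def)
  define a where "a = \<chi> v0"
  show ?thesis
  proof
    fix s
    define N where "N = degree (cp s)"
    define w where "w = (\<Sum>d\<le>N. emb (\<chi> (comp d s) / a ^ d) * v0 ^ d)"
    have wA: "w \<in> A" unfolding w_def
      by (intro A_sum A_closed(4) A_emb A_power v0A)
    have cw: "comp e w = (if e \<le> N then emb (\<chi> (comp e s) / a ^ e) * v0 ^ e else 0)" for e
    proof -
      have "comp e w = (\<Sum>d\<le>N. emb (\<chi> (comp d s) / a ^ d) * comp e (v0 ^ d))"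
        unfolding w_def comp_sum comp_smult ..
      also have "\<dots> = (\<Sum>d\<le>N. if d = e then emb (\<chi> (comp d s) / a ^ d) * v0 ^ d else 0)"
        by (rule sum.cong) (auto simp: comp_hom[OF Sd_power[OF v0S]])
      also have "\<dots> = (if e \<le> N then emb (\<chi> (comp e s) / a ^ e) * v0 ^ e else 0)"
        by (simp add: sum.delta')
      finally show ?thesis .
    qed
    have "\<chi> (comp e (s - w)) = 0" for e
    proof (cases "e \<le> N")
      case True
      have "a ^ e \<noteq> 0" using v0 a_def by simp
      then show ?thesis using True
        by (simp add: comp_diff cw char_diff[OF ch] char_mult[OF ch] char_emb[OF ch]
            char_power[OF ch] a_def[symmetric])
    next
      case False
      then have "comp e s = 0" unfolding N_def by (intro comp_eq_0_big) simp
      then show ?thesis using False ch by (simp add: comp_diff cw char_diff[OF ch])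
    qed
    then have sw: "s - w \<in> Hc \<chi>" unfolding Hc_def by blast
    then have "\<chi> (s - w) = 0" using Hc_sub_ker[OF ch] by blast
    moreover have "\<chi>' (s - w) = 0" using sw HH Hc_sub_ker[OF ch'] by blast
    ultimately show "\<chi> s = \<chi>' s"
      using agree wA char_diff[OF ch] char_diff[OF ch'] by simp
  qed
qed

end


context gcaV
begin

inductive_set VSd :: "nat \<Rightarrow> 'a set" for m :: nat where
  VS0: "0 \<in> VSd m"
| VSadd: "x \<in> VSd m \<Longrightarrow> y \<in> VSd m \<Longrightarrow> x + y \<in> VSd m"
| VSgen: "v \<in> V \<Longrightarrow> s \<in> Sd m \<Longrightarrow> v * s \<in> VSd m"

lemma VSd_mult: "z \<in> VSd m \<Longrightarrow> r \<in> Sd i \<Longrightarrow> r * z \<in> VSd (i + m)"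
proof (induction z rule: VSd.induct)
  case VS0 then show ?case by (simp add: VSd.VS0)
next
  case (VSadd x y) then show ?case by (simp add: distrib_left VSd.VSadd)
next
  case (VSgen v s)
  have "r * (v * s) = v * (r * s)" by (simp add: ac_simps)
  moreover have "r * s \<in> Sd (i + m)" using Smult VSgen by blast
  ultimately show ?case using VSgen VSd.VSgen by metis
qed

lemma VSd_sum: "(\<And>i. i \<in> I \<Longrightarrow> f i \<in> VSd m) \<Longrightarrow> sum f I \<in> VSd m"
  by (induction I rule: infinite_finite_induct) (auto intro: VSd.VS0 VSd.VSadd)

lemma VSd_smult: "z \<in> VSd m \<Longrightarrow> emb c * z \<in> VSd m"
  using VSd_mult[of z m "emb c" 0] S0 by simp

lemma idl_V_graded:
  "x \<in> idl V \<Longrightarrow> comp 0 x = 0 \<and> (\<forall>d. comp (Suc d) x \<in> VSd d)"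
proof -
  define J where "J = {x. comp 0 x = 0 \<and> (\<forall>d. comp (Suc d) x \<in> VSd d)}"
  have "is_ideal J" unfolding is_ideal_def
  proof (intro conjI ballI allI)
    show "0 \<in> J" unfolding J_def using comp_emb[of _ 0] by (simp add: VSd.VS0)
  next
    fix x y assume "x \<in> J" "y \<in> J" then show "x + y \<in> J"
      unfolding J_def by (simp add: comp_add VSd.VSadd)
  next
    fix x r assume x: "x \<in> J"
    have "comp 0 (r * x) = 0" using x unfolding J_def by (simp add: comp_mult)
    moreover have "comp (Suc d) (r * x) \<in> VSd d" for d
    proof -
      have "comp (Suc d) (r * x) = (\<Sum>i\<le>Suc d. comp i r * comp (Suc d - i) x)" by (rule comp_mult)
      also have "\<dots> \<in> VSd d"
      proof (rule VSd_sum)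
        fix i assume i: "i \<in> {..Suc d}"
        show "comp i r * comp (Suc d - i) x \<in> VSd d"
        proof (cases "i = Suc d")
          case True then show ?thesis using x unfolding J_def by (simp add: VSd.VS0)
        next
          case False
          then have i': "i \<le> d" "Suc d - i = Suc (d - i)" using i by auto
          have "comp (Suc (d - i)) x \<in> VSd (d - i)" using x unfolding J_def by blast
          then have "comp i r * comp (Suc (d - i)) x \<in> VSd (i + (d - i))"
            by (rule VSd_mult) (rule comp_in)
          then show ?thesis using i' by simp
        qed
      qed
      finally show ?thesis .
    qed
    ultimately show "r * x \<in> J" unfolding J_def by blast
  qed
  moreover have "V \<subseteq> J"
  proof
    fix v assume v: "v \<in> V"
    then have vS: "v \<in> Sd 1" using V1 by blast
    have "v * 1 \<in> VSd 0" using v Sd_1 by (rule VSd.VSgen)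
    then show "v \<in> J" unfolding J_def using vS by (auto simp: comp_hom VSd.VS0)
  qed
  ultimately have "idl V \<subseteq> J" by (rule idl_least)
  moreover assume "x \<in> idl V"
  ultimately show ?thesis unfolding J_def by blast
qed

lemma power_in_idlV:
  assumes a: "\<forall>P\<in>Proj_pts Sd. \<not> V \<subseteq> P" and g: "g \<in> Sd e" "e \<ge> 1"
  shows "\<exists>N. g ^ N \<in> idl V"
proof (rule ccontr)
  assume "\<not> ?thesis"
  then have "\<forall>k. g ^ k \<notin> idl V" by blast
  then obtain \<chi> where ch: "is_char emb \<chi>" "\<forall>x\<in>idl V. \<chi> x = 0" "\<chi> g \<noteq> 0"
    using char_exists[OF is_ideal_idl] by blast
  have "\<forall>v\<in>V. \<chi> v = 0" using ch(2) idl_sub by blast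
  then have "\<chi> g = \<chi> (comp 0 g)" using char_V0[OF a ch(1)] by blast
  also have "comp 0 g = 0" using g by (simp add: comp_hom)
  finally show False using ch by simp
qed


lemma alg_gen_closed: "range emb \<subseteq> alg_gen emb X" "X \<subseteq> alg_gen emb X"
  "x \<in> alg_gen emb X \<Longrightarrow> y \<in> alg_gen emb X \<Longrightarrow> x + y \<in> alg_gen emb X"
  "x \<in> alg_gen emb X \<Longrightarrow> y \<in> alg_gen emb X \<Longrightarrow> x * y \<in> alg_gen emb X"
  "x \<in> alg_gen emb X \<Longrightarrow> - x \<in> alg_gen emb X"
  unfolding alg_gen_def by blast+

lemma alg_gen_sum: "(\<And>i. i \<in> I \<Longrightarrow> f i \<in> alg_gen emb X) \<Longrightarrow> sum f I \<in> alg_gen emb X"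
proof (induction I rule: infinite_finite_induct)
  case (infinite A) then show ?case using alg_gen_closed(1) emb_0 by (metis rangeI subsetD sum.infinite)
next
  case empty then show ?case using alg_gen_closed(1) emb_0 by (metis rangeI subsetD sum.empty)
next
  case (insert x F) then show ?case by (simp add: alg_gen_closed(3))
qed

lemma alg_gen_mono: "Y \<subseteq> alg_gen emb X \<Longrightarrow> alg_gen emb Y \<subseteq> alg_gen emb X"
  unfolding alg_gen_def[of emb Y]
  by (rule Inter_lower) (use alg_gen_closed[where X=X] in blast)

definition mon :: "(nat \<times> 'a) list \<Rightarrow> 'a" where "mon l = prod_list (map snd l)"
definition mdeg :: "(nat \<times> 'a) list \<Rightarrow> nat" where "mdeg l = sum_list (map fst l)"

lemma mon_Cons[simp]: "mon (p # l) = snd p * mon l" by (simp add: mon_def)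
lemma mdeg_Cons[simp]: "mdeg (p # l) = fst p + mdeg l" by (simp add: mdeg_def)
lemma mon_Nil[simp]: "mon [] = 1" by (simp add: mon_def)
lemma mdeg_Nil[simp]: "mdeg [] = 0" by (simp add: mdeg_def)

lemma extract_pow:
  "count_list l p \<ge> k \<Longrightarrow> \<exists>l''. set l'' \<subseteq> set l \<and> mon l = snd p ^ k * mon l'' \<and> mdeg l = k * fst p + mdeg l''"
proof (induction l arbitrary: k)
  case Nil then show ?case by auto
next
  case (Cons q l)
  show ?case
  proof (cases "k = 0")
    case True then show ?thesis by (intro exI[of _ "q # l"]) auto
  next
    case False
    show ?thesis
    proof (cases "q = p")
      case True
      then have "count_list l p \<ge> k - 1" using Cons(2) by simp
      then obtain l'' where l'': "set l'' \<subseteq> set l" "mon l = snd p ^ (k - 1) * mon l''"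
        "mdeg l = (k - 1) * fst p + mdeg l''" using Cons(1) by blast
      have k: "k = Suc (k - 1)" using False by simp
      have "mon (q # l) = snd p ^ k * mon l''"
        using True l''(2) by (subst k) (simp add: ac_simps)
      moreover have "mdeg (q # l) = k * fst p + mdeg l''"
        using True l''(3) by (subst k) simp
      ultimately show ?thesis using l''(1) by (intro exI[of _ l'']) auto
    next
      case qp: False
      then have "count_list l p \<ge> k" using Cons(2) by simp
      then obtain l'' where l'': "set l'' \<subseteq> set l" "mon l = snd p ^ k * mon l''"
        "mdeg l = k * fst p + mdeg l''" using Cons(1) by blast
      show ?thesis using l'' by (intro exI[of _ "q # l''"]) (auto simp: ac_simps)
    qed
  qed
qed

lemma fin_module:
  assumes a: "\<forall>P\<in>Proj_pts Sd. \<not> V \<subseteq> P"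
  shows "\<exists>E. finite E \<and> (\<forall>x. \<exists>b. (\<forall>e\<in>E. b e \<in> A) \<and> x = (\<Sum>e\<in>E. b e * e))"
proof -
  obtain G0 where G0: "finite G0" "alg_gen emb G0 = UNIV" using fgen by blast
  define H where "H = (\<Union>g\<in>G0. (\<lambda>d. (d, comp d g)) ` {1..degree (cp g)})"
  have finH: "finite H" unfolding H_def using G0(1) by auto
  have Hp: "p \<in> H \<Longrightarrow> fst p \<ge> 1 \<and> snd p \<in> Sd (fst p)" for p
    unfolding H_def by (auto simp: comp_in)
  have mon_in: "set l \<subseteq> H \<Longrightarrow> mon l \<in> Sd (mdeg l)" for l
  proof (induction l)
    case Nil then show ?case by (simp add: Sd_1)
  next
    case (Cons p l) then show ?case using Hp[of p] Smult by auto
  qed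
  have len_le: "set l \<subseteq> H \<Longrightarrow> length l \<le> mdeg l" for l
    by (induction l) (auto dest: Hp)
  have G0sub: "G0 \<subseteq> alg_gen emb (snd ` H)"
  proof
    fix g assume g: "g \<in> G0"
    define N where "N = degree (cp g)"
    have "g = (\<Sum>d\<le>N. comp d g)" unfolding N_def by (rule comp_sum_eq)
    also have "{..N} = insert 0 {1..N}" by auto
    finally have geq: "g = comp 0 g + (\<Sum>d\<in>{1..N}. comp d g)" by simp
    obtain c where "comp 0 g = emb c" using comp_0_emb by blast
    then have "comp 0 g \<in> alg_gen emb (snd ` H)" using alg_gen_closed(1) by blast
    moreover have "(\<Sum>d\<in>{1..N}. comp d g) \<in> alg_gen emb (snd ` H)"
    proof (rule alg_gen_sum)
      fix d assume "d \<in> {1..N}"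
      then have "(d, comp d g) \<in> H" unfolding H_def N_def using g by blast
      then show "comp d g \<in> alg_gen emb (snd ` H)" using alg_gen_closed(2) by force
    qed
    ultimately show "g \<in> alg_gen emb (snd ` H)" using geq alg_gen_closed(3) by metis
  qed
  have spanH: "x \<in> vs.span (mon ` lists H)" for x
  proof -
    have "x \<in> alg_gen emb (snd ` H)" using alg_gen_mono[OF G0sub] G0(2) by blast
    then have "x \<in> vs.span (prod_list ` lists (snd ` H))" using span_monomials by blast
    moreover have "prod_list ` lists (snd ` H) = mon ` lists H"
      unfolding lists_image mon_def image_image by simp
    ultimately show ?thesis by simp
  qed
  define Md where "Md d = mon ` {l \<in> lists H. mdeg l = d}" for d
  have Md_span: "x \<in> vs.span (Md d)" if x: "x \<in> Sd d" for x d
  proof -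
    obtain t r where tr: "x = (\<Sum>b\<in>t. emb (r b) * b)" "finite t" "t \<subseteq> mon ` lists H"
      using spanH[of x] unfolding vs.span_explicit by blast
    have "x = comp d x" using x by (simp add: comp_hom)
    also have "\<dots> = (\<Sum>b\<in>t. emb (r b) * comp d b)"
      unfolding tr(1) comp_sum comp_smult ..
    also have "\<dots> \<in> vs.span (Md d)"
    proof (intro vs.span_sum vs.span_scale)
      fix b assume "b \<in> t"
      then obtain l where l: "l \<in> lists H" "b = mon l" using tr(3) by blast
      have "set l \<subseteq> H" using l(1) by (simp add: in_lists_conv_set subset_iff)
      then have "mon l \<in> Sd (mdeg l)" by (rule mon_in)
      then have "comp d b = (if d = mdeg l then mon l else 0)"
        using l(2) by (simp add: comp_hom)
      then show "comp d b \<in> vs.span (Md d)"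
        using l unfolding Md_def by (auto intro: vs.span_base vs.span_zero)
    qed
    finally show ?thesis .
  qed
  have "\<forall>p\<in>H. \<exists>N. snd p ^ N \<in> idl V"
    using power_in_idlV[OF a] Hp by blast
  then obtain Nf where Nf: "\<And>p. p \<in> H \<Longrightarrow> snd p ^ Nf p \<in> idl V" by metis
  define N where "N = Max (insert 1 (Nf ` H))"
  have N1: "N \<ge> 1" unfolding N_def using finH by simp
  have gN: "snd p ^ N \<in> idl V" if p: "p \<in> H" for p
  proof -
    have "Nf p \<le> N" unfolding N_def using finH p by simp
    then have "snd p ^ N = snd p ^ (N - Nf p) * snd p ^ Nf p"
      by (simp add: power_add[symmetric])
    then show ?thesis using Nf[OF p] ideal_multL[OF is_ideal_idl] by metis
  qed
  have big: "mon l \<in> VSd (mdeg l - 1)" if l: "set l \<subseteq> H" "length l > card H * N" for l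
  proof -
    have "\<exists>p\<in>H. count_list l p \<ge> N"
    proof (rule ccontr)
      assume "\<not> ?thesis"
      then have "\<forall>p\<in>H. count_list l p \<le> N" by auto
      then have "sum (count_list l) H \<le> sum (\<lambda>_. N) H" by (intro sum_mono) auto
      then have "length l \<le> card H * N" using sum_count_set[OF l(1) finH] by simp
      then show False using l(2) by simp
    qed
    then obtain p where p: "p \<in> H" "count_list l p \<ge> N" by blast
    obtain l'' where l'': "set l'' \<subseteq> set l" "mon l = snd p ^ N * mon l''"
      "mdeg l = N * fst p + mdeg l''" using extract_pow[OF p(2)] by blast
    have e1: "fst p \<ge> 1" and gS: "snd p \<in> Sd (fst p)" using Hp[OF p(1)] by auto
    have Ne: "N * fst p \<ge> 1" using e1 N1 by simp
    have gpS: "snd p ^ N \<in> Sd (N * fst p)" using Sd_power'[OF gS] .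
    have "comp (Suc (N * fst p - 1)) (snd p ^ N) \<in> VSd (N * fst p - 1)"
      using idl_V_graded[OF gN[OF p(1)]] by blast
    moreover have "Suc (N * fst p - 1) = N * fst p" using Ne by simp
    ultimately have "snd p ^ N \<in> VSd (N * fst p - 1)" using gpS by (simp add: comp_hom)
    moreover have "mon l'' \<in> Sd (mdeg l'')" using mon_in l''(1) l(1) by blast
    ultimately have "mon l'' * snd p ^ N \<in> VSd (mdeg l'' + (N * fst p - 1))"
      by (intro VSd_mult)
    moreover have "mdeg l'' + (N * fst p - 1) = mdeg l - 1" using l''(3) Ne by simp
    ultimately show ?thesis using l''(2) by (simp add: ac_simps)
  qed
  define emax where "emax = Max (insert 1 (fst ` H))"
  have mdeg_le: "set l \<subseteq> H \<Longrightarrow> mdeg l \<le> emax * length l" for l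
  proof (induction l)
    case Nil then show ?case by simp
  next
    case (Cons p l)
    have "fst p \<le> emax" unfolding emax_def using Cons(2) finH by simp
    then show ?case using Cons by simp
  qed
  define D0 where "D0 = emax * (card H * N)"
  have high: "Sd d \<subseteq> VSd (d - 1)" if d: "d > D0" for d
  proof
    fix x assume "x \<in> Sd d"
    then have "x \<in> vs.span (Md d)" by (rule Md_span)
    then show "x \<in> VSd (d - 1)"
    proof (induction x rule: vs.span_induct_alt)
      case base then show ?case by (rule VSd.VS0)
    next
      case (step c b y)
      obtain l where l: "set l \<subseteq> H" "mdeg l = d" "b = mon l"
        using step(1) unfolding Md_def by auto
      have "length l > card H * N"
      proof (rule ccontr)
        assume "\<not> ?thesis"
        then have "emax * length l \<le> D0" unfolding D0_def by simp
        then show False using mdeg_le[OF l(1)] l(2) d by simp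
      qed
      then have "b \<in> VSd (d - 1)" using big[OF l(1)] l by simp
      then show ?case using step(2) by (intro VSd.VSadd VSd_smult)
    qed
  qed
  define E where "E = mon ` {l. set l \<subseteq> H \<and> length l \<le> D0}"
  have finE: "finite E" unfolding E_def using finite_lists_length_le[OF finH] by simp
  define Amod where "Amod = {x. \<exists>b. (\<forall>e\<in>E. b e \<in> A) \<and> x = (\<Sum>e\<in>E. b e * e)}"
  have Amod0: "0 \<in> Amod" unfolding Amod_def using A_0 by (intro CollectI exI[of _ "\<lambda>_. 0"]) auto
  have Amod_add: "x \<in> Amod \<Longrightarrow> y \<in> Amod \<Longrightarrow> x + y \<in> Amod" for x y
  proof -
    assume "x \<in> Amod" "y \<in> Amod"
    then obtain b1 b2 where "\<forall>e\<in>E. b1 e \<in> A" "x = (\<Sum>e\<in>E. b1 e * e)"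
      "\<forall>e\<in>E. b2 e \<in> A" "y = (\<Sum>e\<in>E. b2 e * e)" unfolding Amod_def by blast
    then show ?thesis unfolding Amod_def
      by (intro CollectI exI[of _ "\<lambda>e. b1 e + b2 e"])
         (auto simp: sum.distrib distrib_right intro: A_closed(3))
  qed
  have Amod_mult: "r \<in> A \<Longrightarrow> x \<in> Amod \<Longrightarrow> r * x \<in> Amod" for r x
  proof -
    assume r: "r \<in> A" and "x \<in> Amod"
    then obtain b1 where "\<forall>e\<in>E. b1 e \<in> A" "x = (\<Sum>e\<in>E. b1 e * e)" unfolding Amod_def by blast
    then show ?thesis unfolding Amod_def using r
      by (intro CollectI exI[of _ "\<lambda>e. r * b1 e"])
         (auto simp: sum_distrib_left ac_simps intro: A_closed(4))
  qed
  have Amod_sum: "(\<And>i. i \<in> I \<Longrightarrow> f i \<in> Amod) \<Longrightarrow> sum f I \<in> Amod" for f and I :: "nat set"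
    by (induction I rule: infinite_finite_induct) (auto intro: Amod0 Amod_add)
  have low: "Sd d \<subseteq> Amod" if d: "d \<le> D0" for d
  proof
    fix x assume "x \<in> Sd d"
    then have "x \<in> vs.span (Md d)" by (rule Md_span)
    moreover have "Md d \<subseteq> E" unfolding Md_def E_def using len_le d by force
    ultimately have "x \<in> vs.span E" using vs.span_mono by blast
    then obtain u where "x = (\<Sum>v\<in>E. emb (u v) * v)" using vs.span_finite[OF finE] by blast
    then show "x \<in> Amod" unfolding Amod_def using A_emb
      by (intro CollectI exI[of _ "\<lambda>v. emb (u v)"]) auto
  qed
  have all: "Sd d \<subseteq> Amod" for d
  proof (induction d rule: less_induct)
    case (less d)
    show ?case
    proof (cases "d \<le> D0")
      case True then show ?thesis by (rule low)
    next
      case False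
      then have d: "d > D0" by simp
      have IH: "Sd (d - 1) \<subseteq> Amod" using less d by simp
      show ?thesis
      proof
        fix x assume "x \<in> Sd d"
        then have "x \<in> VSd (d - 1)" using high[OF d] by blast
        then show "x \<in> Amod"
        proof (induction x rule: VSd.induct)
          case VS0 then show ?case by (rule Amod0)
        next
          case (VSadd x y) then show ?case using Amod_add by blast
        next
          case (VSgen v s)
          then show ?case using IH A_closed(2) by (intro Amod_mult) auto
        qed
      qed
    qed
  qed
  have "x \<in> Amod" for x
  proof -
    have "x = (\<Sum>d\<le>degree (cp x). comp d x)" by (rule comp_sum_eq)
    also have "\<dots> \<in> Amod" using all comp_in by (intro Amod_sum) blast
    finally show ?thesis .
  qed
  then show ?thesis using finE unfolding Amod_def by blast
qed

end


context gcaV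
begin

lemma nakayama:
  fixes I :: "'a set"
  assumes finE: "finite E" and IA: "I \<subseteq> A" and I0: "0 \<in> I"
    and Iadd: "\<And>x y. x \<in> I \<Longrightarrow> y \<in> I \<Longrightarrow> x + y \<in> I"
    and Imult: "\<And>x r. x \<in> I \<Longrightarrow> r \<in> A \<Longrightarrow> r * x \<in> I"
    and Q: "is_ideal Q"
  shows "u \<in> A \<Longrightarrow> u - 1 \<in> I \<Longrightarrow>
    (\<forall>e\<in>E. \<exists>b. (\<forall>e'\<in>E. b e' \<in> I) \<and> u * e - (\<Sum>e'\<in>E. b e' * e') \<in> Q) \<Longrightarrow>
    \<exists>c\<in>A. c - 1 \<in> I \<and> (\<forall>e\<in>E. c * e \<in> Q)"
  using finE
proof (induction E arbitrary: u rule: finite_induct)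
  case empty
  then show ?case using A_1 I0 by (intro bexI[of _ 1]) auto
next
  case (insert e0 E)
  have Idiff: "x \<in> I \<Longrightarrow> y \<in> I \<Longrightarrow> x - y \<in> I" for x y
  proof -
    assume xy: "x \<in> I" "y \<in> I"
    have m1: "- 1 \<in> A" using A_emb[of "- 1"] by simp
    have "(- 1) * y \<in> I" using Imult[OF xy(2) m1] .
    then have "x + (- 1) * y \<in> I" using Iadd xy(1) by blast
    then show ?thesis by simp
  qed
  obtain B where B: "\<And>e e'. e \<in> insert e0 E \<Longrightarrow> e' \<in> insert e0 E \<Longrightarrow> B e e' \<in> I"
    "\<And>e. e \<in> insert e0 E \<Longrightarrow> u * e - (\<Sum>e'\<in>insert e0 E. B e e' * e') \<in> Q"
  proof -
    from insert.prems(3) have "\<forall>e\<in>insert e0 E. \<exists>b. (\<forall>e'\<in>insert e0 E. b e' \<in> I) \<and>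
        u * e - (\<Sum>e'\<in>insert e0 E. b e' * e') \<in> Q" .
    from bchoice[OF this] obtain B where "\<forall>e\<in>insert e0 E. (\<forall>e'\<in>insert e0 E. B e e' \<in> I) \<and>
        u * e - (\<Sum>e'\<in>insert e0 E. B e e' * e') \<in> Q" by blast
    then show ?thesis by (intro that[of B]) auto
  qed
  have BA: "e \<in> insert e0 E \<Longrightarrow> e' \<in> insert e0 E \<Longrightarrow> B e e' \<in> A" for e e' using B(1) IA by (meson subsetD)
  define w where "w = u - B e0 e0"
  have wA: "w \<in> A" unfolding w_def using insert.prems(1) BA A_diff by blast
  have w1: "w - 1 \<in> I"
  proof -
    have eqw: "w - 1 = (u - 1) - B e0 e0" unfolding w_def by (simp add: algebra_simps)
    have "B e0 e0 \<in> I" using B(1) by blast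
    then have "(u - 1) - B e0 e0 \<in> I" using insert.prems(2) Idiff by blast
    then show ?thesis unfolding eqw .
  qed
  define R0 where "R0 = (\<Sum>e'\<in>E. B e0 e' * e')"
  have e0Q: "w * e0 - R0 \<in> Q"
  proof -
    have "(\<Sum>e'\<in>insert e0 E. B e0 e' * e') = B e0 e0 * e0 + R0"
      unfolding R0_def using insert(1,2) by simp
    moreover have "u * e0 - (B e0 e0 * e0 + R0) = w * e0 - R0"
      unfolding w_def by (simp add: left_diff_distrib)
    ultimately have "u * e0 - (\<Sum>e'\<in>insert e0 E. B e0 e' * e') = w * e0 - R0" by simp
    then show ?thesis using B(2)[of e0] by simp
  qed
  define b' where "b' e e' = w * B e e' + B e e0 * B e0 e'" for e e'
  have step: "\<forall>e\<in>E. \<exists>b. (\<forall>e'\<in>E. b e' \<in> I) \<and> (w * u) * e - (\<Sum>e'\<in>E. b e' * e') \<in> Q"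
  proof
    fix e assume e: "e \<in> E"
    define R where "R = (\<Sum>e'\<in>E. B e e' * e')"
    have h1: "u * e - B e e0 * e0 - R \<in> Q"
    proof -
      have sEq: "(\<Sum>e'\<in>insert e0 E. B e e' * e') = B e e0 * e0 + R"
        unfolding R_def using insert(1,2) by simp
      have eq2: "u * e - B e e0 * e0 - R = u * e - (\<Sum>e'\<in>insert e0 E. B e e' * e')"
        unfolding sEq by (simp add: diff_diff_eq)
      have "u * e - (\<Sum>e'\<in>insert e0 E. B e e' * e') \<in> Q" using B(2) e by blast
      then show ?thesis unfolding eq2 .
    qed
    have eq: "(w * u) * e - (\<Sum>e'\<in>E. b' e e' * e') =
        w * (u * e - B e e0 * e0 - R) + B e e0 * (w * e0 - R0)"
    proof -
      have "(\<Sum>e'\<in>E. b' e e' * e') = (\<Sum>e'\<in>E. w * (B e e' * e') + B e e0 * (B e0 e' * e'))"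
        unfolding b'_def by (rule sum.cong) (simp_all add: distrib_right mult.assoc)
      also have "\<dots> = w * R + B e e0 * R0"
        unfolding R_def R0_def sum.distrib sum_distrib_left ..
      finally have s: "(\<Sum>e'\<in>E. b' e e' * e') = w * R + B e e0 * R0" .
      have "(w * u) * e - (w * R + B e e0 * R0) =
        w * (u * e - B e e0 * e0 - R) + B e e0 * (w * e0 - R0)"
        by (simp add: algebra_simps)
      then show ?thesis unfolding s .
    qed
    have "w * (u * e - B e e0 * e0 - R) + B e e0 * (w * e0 - R0) \<in> Q"
      using ideal_add[OF Q ideal_multL[OF Q h1] ideal_multL[OF Q e0Q]] .
    moreover have "\<forall>e'\<in>E. b' e e' \<in> I"
      unfolding b'_def using B(1) e wA BA by (auto intro!: Iadd Imult)
    ultimately show "\<exists>b. (\<forall>e'\<in>E. b e' \<in> I) \<and> (w * u) * e - (\<Sum>e'\<in>E. b e' * e') \<in> Q"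
      using eq by (intro exI[of _ "b' e"]) simp
  qed
  have wuA: "w * u \<in> A" using wA insert.prems(1) A_closed(4) by blast
  have wu1: "w * u - 1 \<in> I"
  proof -
    have eq: "w * u - 1 = w * (u - 1) + (w - 1)" by (simp add: algebra_simps)
    have "w * (u - 1) \<in> I" using Imult insert.prems(2) wA by blast
    then have "w * (u - 1) + (w - 1) \<in> I" using Iadd w1 by blast
    then show ?thesis unfolding eq .
  qed
  obtain c where c: "c \<in> A" "c - 1 \<in> I" "\<forall>e\<in>E. c * e \<in> Q"
    using insert.IH[OF wuA wu1 step] by blast
  have cwA: "c * w \<in> A" using c(1) wA A_closed(4) by blast
  have cw1: "c * w - 1 \<in> I"
  proof -
    have eq: "c * w - 1 = c * (w - 1) + (c - 1)" by (simp add: algebra_simps)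
    have "c * (w - 1) \<in> I" using Imult c(1) w1 by blast
    then have "c * (w - 1) + (c - 1) \<in> I" using Iadd c(2) by blast
    then show ?thesis unfolding eq .
  qed
  have "\<forall>e\<in>insert e0 E. c * w * e \<in> Q"
  proof
    fix e assume "e \<in> insert e0 E"
    then show "c * w * e \<in> Q"
    proof
      assume e: "e = e0"
      have "(\<Sum>e'\<in>E. B e0 e' * (c * e')) = c * R0"
        unfolding R0_def sum_distrib_left by (rule sum.cong) (simp_all add: ac_simps)
      then have "c * w * e0 = c * (w * e0 - R0) + (\<Sum>e'\<in>E. B e0 e' * (c * e'))"
        by (simp add: algebra_simps)
      moreover have "(\<Sum>e'\<in>E. B e0 e' * (c * e')) \<in> Q"
        by (rule ideal_sum[OF Q], rule ideal_multL[OF Q]) (use c(3) in blast)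
      moreover have "c * (w * e0 - R0) \<in> Q" using ideal_multL[OF Q e0Q] .
      ultimately show ?thesis using e ideal_add[OF Q] by simp
    next
      assume "e \<in> E"
      then have "c * e \<in> Q" using c by blast
      then have "w * (c * e) \<in> Q" by (rule ideal_multL[OF Q])
      then show ?thesis by (simp add: ac_simps)
    qed
  qed
  then show ?case using cwA cw1 by blast
qed


lemma lying_over:
  assumes a: "\<forall>P\<in>Proj_pts Sd. \<not> V \<subseteq> P" and Q: "is_ideal Q"
    and ch: "is_char emb \<chi>" and QA: "\<forall>x\<in>Q \<inter> A. \<chi> x = 0"
  shows "\<exists>\<chi>'. is_char emb \<chi>' \<and> (\<forall>x\<in>Q. \<chi>' x = 0) \<and> (\<forall>x\<in>A. \<chi>' x = \<chi> x)"
proof -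
  obtain E where finE: "finite E" and gen: "\<forall>x. \<exists>b. (\<forall>e\<in>E. b e \<in> A) \<and> x = (\<Sum>e\<in>E. b e * e)"
    using fin_module[OF a] by blast
  define p' where "p' = {x \<in> A. \<chi> x = 0}"
  have p'A: "p' \<subseteq> A" unfolding p'_def by blast
  have p'0: "0 \<in> p'" unfolding p'_def using A_0 ch by simp
  have p'add: "x \<in> p' \<Longrightarrow> y \<in> p' \<Longrightarrow> x + y \<in> p'" for x y
    unfolding p'_def using A_closed(3) char_add[OF ch] by auto
  have p'mult: "x \<in> p' \<Longrightarrow> r \<in> A \<Longrightarrow> r * x \<in> p'" for x r
    unfolding p'_def using A_closed(4) char_mult[OF ch] by auto
  have p'sum: "(\<And>i. i \<in> I \<Longrightarrow> f i \<in> p') \<Longrightarrow> sum f I \<in> p'" for f and I :: "'a set"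
    by (induction I rule: infinite_finite_induct) (auto intro: p'0 p'add)
  obtain a1 where a1: "\<forall>e\<in>E. a1 e \<in> A" "1 = (\<Sum>e\<in>E. a1 e * e)" using gen by blast
  define J where "J = idl (Q \<union> p')"
  have J1: "1 \<notin> J"
  proof
    assume J1: "1 \<in> J"
    define K where "K = {x. \<exists>b. (\<forall>e\<in>E. b e \<in> p') \<and> x - (\<Sum>e\<in>E. b e * e) \<in> Q}"
    have Kid: "is_ideal K" unfolding is_ideal_def
    proof (intro conjI ballI allI)
      show "0 \<in> K" unfolding K_def using p'0 ideal_0[OF Q]
        by (intro CollectI exI[of _ "\<lambda>_. 0"]) auto
    next
      fix x y assume "x \<in> K" "y \<in> K"
      then obtain b1 b2 where b: "\<forall>e\<in>E. b1 e \<in> p'" "x - (\<Sum>e\<in>E. b1 e * e) \<in> Q"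
        "\<forall>e\<in>E. b2 e \<in> p'" "y - (\<Sum>e\<in>E. b2 e * e) \<in> Q" unfolding K_def by blast
      have eq: "(x + y) - (\<Sum>e\<in>E. (b1 e + b2 e) * e) =
          (x - (\<Sum>e\<in>E. b1 e * e)) + (y - (\<Sum>e\<in>E. b2 e * e))"
        by (simp add: distrib_right sum.distrib algebra_simps)
      have inQ: "(x + y) - (\<Sum>e\<in>E. (b1 e + b2 e) * e) \<in> Q"
        unfolding eq by (rule ideal_add[OF Q b(2) b(4)])
      have "\<forall>e\<in>E. b1 e + b2 e \<in> p'" using b(1,3) p'add by blast
      then show "x + y \<in> K" unfolding K_def using inQ
        by (intro CollectI exI[of _ "\<lambda>e. b1 e + b2 e"]) simp
    next
      fix x r assume "x \<in> K"
      then obtain b where b: "\<forall>e\<in>E. b e \<in> p'" "x - (\<Sum>e\<in>E. b e * e) \<in> Q"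
        unfolding K_def by blast
      have "\<forall>e'. \<exists>\<alpha>. (\<forall>e\<in>E. \<alpha> e \<in> A) \<and> r * e' = (\<Sum>e\<in>E. \<alpha> e * e)" using gen by blast
      then obtain \<alpha> where \<alpha>: "\<And>e'. (\<forall>e\<in>E. \<alpha> e' e \<in> A) \<and> r * e' = (\<Sum>e\<in>E. \<alpha> e' e * e)"
        using choice[of "\<lambda>e' \<alpha>. (\<forall>e\<in>E. \<alpha> e \<in> A) \<and> r * e' = (\<Sum>e\<in>E. \<alpha> e * e)"] by blast
      define \<beta> where "\<beta> e'' = (\<Sum>e'\<in>E. b e' * \<alpha> e' e'')" for e''
      have \<beta>p: "\<forall>e''\<in>E. \<beta> e'' \<in> p'"
        unfolding \<beta>_def using b(1) \<alpha> by (auto intro!: p'sum simp: mult.commute[of "b _"] intro: p'mult)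
      have "(\<Sum>e'\<in>E. b e' * (r * e')) = (\<Sum>e'\<in>E. \<Sum>e''\<in>E. b e' * \<alpha> e' e'' * e'')"
        using \<alpha> by (simp add: sum_distrib_left mult.assoc)
      also have "\<dots> = (\<Sum>e''\<in>E. \<Sum>e'\<in>E. b e' * \<alpha> e' e'' * e'')" by (rule sum.swap)
      also have "\<dots> = (\<Sum>e''\<in>E. \<beta> e'' * e'')" unfolding \<beta>_def sum_distrib_right ..
      finally have s: "(\<Sum>e'\<in>E. b e' * (r * e')) = (\<Sum>e''\<in>E. \<beta> e'' * e'')" .
      have "r * x - (\<Sum>e''\<in>E. \<beta> e'' * e'') = r * (x - (\<Sum>e\<in>E. b e * e))"
        unfolding s[symmetric] by (simp add: right_diff_distrib sum_distrib_left ac_simps)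
      moreover have "r * (x - (\<Sum>e\<in>E. b e * e)) \<in> Q" using ideal_multL[OF Q b(2)] .
      ultimately show "r * x \<in> K" unfolding K_def using \<beta>p by auto
    qed
    have QK: "Q \<subseteq> K" unfolding K_def using p'0
      by (auto intro!: exI[of _ "\<lambda>_. 0"])
    have pK: "p' \<subseteq> K"
    proof
      fix x assume x: "x \<in> p'"
      have "x = x * (\<Sum>e\<in>E. a1 e * e)" unfolding a1(2)[symmetric] by simp
      also have "\<dots> = (\<Sum>e\<in>E. (x * a1 e) * e)" unfolding sum_distrib_left
        by (rule sum.cong) (simp_all add: mult.assoc)
      finally have "x = (\<Sum>e\<in>E. (x * a1 e) * e)" .
      moreover have "\<forall>e\<in>E. x * a1 e \<in> p'" using x a1(1) p'mult by (auto simp: mult.commute)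
      ultimately show "x \<in> K" unfolding K_def using ideal_0[OF Q]
        by (intro CollectI exI[of _ "\<lambda>e. x * a1 e"]) auto
    qed
    have JK: "J \<subseteq> K" unfolding J_def using Kid QK pK by (intro idl_least) auto
    have eK: "\<forall>e\<in>E. \<exists>b. (\<forall>e'\<in>E. b e' \<in> p') \<and> 1 * e - (\<Sum>e'\<in>E. b e' * e') \<in> Q"
    proof
      fix e assume "e \<in> E"
      have "e * 1 \<in> J" using J1 ideal_multL[OF is_ideal_idl] unfolding J_def by blast
      then have "e \<in> K" using JK by auto
      then show "\<exists>b. (\<forall>e'\<in>E. b e' \<in> p') \<and> 1 * e - (\<Sum>e'\<in>E. b e' * e') \<in> Q"
        unfolding K_def by simp
    qed
    have "1 - 1 \<in> p'" using p'0 by simp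
    from nakayama[OF finE p'A p'0 p'add p'mult Q A_1 this eK]
    obtain c where c: "c \<in> A" "c - 1 \<in> p'" "\<forall>e\<in>E. c * e \<in> Q" by blast
    have "c = c * (\<Sum>e\<in>E. a1 e * e)" unfolding a1(2)[symmetric] by simp
    also have "\<dots> = (\<Sum>e\<in>E. a1 e * (c * e))" unfolding sum_distrib_left
      by (rule sum.cong) (simp_all add: mult.left_commute)
    also have "\<dots> \<in> Q" by (rule ideal_sum[OF Q], rule ideal_multL[OF Q]) (use c(3) in blast)
    finally have "\<chi> c = 0" using QA c(1) by blast
    moreover have "\<chi> (c - 1) = 0" using c(2) unfolding p'_def by blast
    ultimately show False using char_diff[OF ch] ch by simp
  qed
  have "\<forall>k. 1 ^ k \<notin> J" using J1 by simp
  then obtain \<chi>' where \<chi>': "is_char emb \<chi>'" "\<forall>x\<in>J. \<chi>' x = 0"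
    using char_exists[OF is_ideal_idl[of "Q \<union> p'"]] unfolding J_def by blast
  have "\<forall>x\<in>Q. \<chi>' x = 0" using \<chi>'(2) idl_sub unfolding J_def by blast
  moreover have "\<forall>x\<in>A. \<chi>' x = \<chi> x"
  proof
    fix x assume x: "x \<in> A"
    have "x - emb (\<chi> x) \<in> p'" unfolding p'_def
      using A_diff[OF x A_emb] char_diff[OF ch] char_emb[OF ch] by simp
    then have "\<chi>' (x - emb (\<chi> x)) = 0" using \<chi>'(2) idl_sub unfolding J_def by blast
    then show "\<chi>' x = \<chi> x" using char_diff[OF \<chi>'(1)] char_emb[OF \<chi>'(1)] by simp
  qed
  ultimately show ?thesis using \<chi>'(1) by blast
qed

lemma spec_incl:
  assumes a: "\<forall>P\<in>Proj_pts Sd. \<not> V \<subseteq> P"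
    and b: "inj_on (contract_V emb V) (Proj_pts Sd)"
    and P: "P \<in> Spec_pts" and Q: "Q \<in> Spec_pts"
    and PQ: "contract_V emb V P = contract_V emb V Q"
  shows "Q \<subseteq> P"
proof
  fix s assume sQ: "s \<in> Q"
  show "s \<in> P"
  proof (rule ccontr)
    assume sP: "s \<notin> P"
    have Pp: "is_prime_ideal P" and Qp: "is_prime_ideal Q" using P Q unfolding Spec_pts_def by auto
    have "\<forall>k. s ^ k \<notin> P" using prime_not_power[OF Pp sP] by blast
    then obtain \<chi> where ch: "is_char emb \<chi>" "\<forall>x\<in>P. \<chi> x = 0" "\<chi> s \<noteq> 0"
      using char_exists Pp unfolding is_prime_ideal_def by blast
    have "\<forall>x\<in>Q \<inter> A. \<chi> x = 0" using PQ ch(2) unfolding contract_V_def by blast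
    then obtain \<chi>' where ch': "is_char emb \<chi>'" "\<forall>x\<in>Q. \<chi>' x = 0" "\<forall>x\<in>A. \<chi>' x = \<chi> x"
      using lying_over[OF a _ ch(1)] Qp unfolding is_prime_ideal_def by blast
    have "\<chi> = \<chi>'" using closed_point_inj[OF a b ch(1) ch'(1)] ch'(3) by simp
    then show False using ch(3) ch'(2) sQ by simp
  qed
qed

lemma phi_imp_hat:
  assumes "phiV_injective_morphism emb Sd V" shows "phiV_hat_injective emb V"
proof -
  have a: "\<forall>P\<in>Proj_pts Sd. \<not> V \<subseteq> P" and b: "inj_on (contract_V emb V) (Proj_pts Sd)"
    using assms unfolding phiV_injective_morphism_def by auto
  show ?thesis unfolding phiV_hat_injective_def
  proof (rule inj_onI)
    fix P Q assume "P \<in> Spec_pts" "Q \<in> Spec_pts" "contract_V emb V P = contract_V emb V Q"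
    then show "P = Q" using spec_incl[OF a b] by (metis subset_antisym)
  qed
qed

definition chi0 :: "'a \<Rightarrow> complex" where "chi0 x = inv emb (comp 0 x)"

lemma chi0_emb: "emb (chi0 x) = comp 0 x"
  unfolding chi0_def using comp_0_emb[of x] emb_inj by (metis f_inv_into_f rangeI)

lemma chi0_char: "is_char emb chi0"
proof -
  have e: "chi0 x = c \<longleftrightarrow> comp 0 x = emb c" for x c
    using chi0_emb[of x] emb_eq_iff by metis
  show ?thesis unfolding is_char_def
  proof (intro conjI allI)
    fix x y
    show "chi0 (x + y) = chi0 x + chi0 y" unfolding e
      by (simp add: comp_add chi0_emb)
    show "chi0 (x * y) = chi0 x * chi0 y" unfolding e
      by (simp add: comp_mult chi0_emb)
  next
    fix c show "chi0 (emb c) = c" unfolding e by (simp add: comp_emb)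
  qed
qed

lemma irrelevant_ker: "irrelevant_ideal Sd = {x. chi0 x = 0}"
  unfolding irrelevant_eq using chi0_emb emb_eq_0_iff by metis

lemma A_minus_comp0: "x \<in> A \<Longrightarrow> x - comp 0 x \<in> idl V"
proof -
  define T where "T = {x. x - comp 0 x \<in> idl V}"
  have I: "is_ideal (idl V)" by (rule is_ideal_idl)
  have "T \<in> {T. range emb \<subseteq> T \<and> V \<subseteq> T \<and>
      (\<forall>x\<in>T. \<forall>y\<in>T. x + y \<in> T \<and> x * y \<in> T \<and> - x \<in> T)}"
  proof (intro CollectI conjI ballI subsetI)
    fix x assume "x \<in> range emb"
    then show "x \<in> T" unfolding T_def using ideal_0[OF I] by (auto simp: comp_emb)
  next
    fix v assume v: "v \<in> V"
    then have "comp 0 v = 0" using V1 by (auto simp: comp_hom)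
    then show "v \<in> T" unfolding T_def using v idl_sub by auto
  next
    fix x y assume x: "x \<in> T" and y: "y \<in> T"
    have x': "x - comp 0 x \<in> idl V" and y': "y - comp 0 y \<in> idl V" using x y unfolding T_def by auto
    have e1: "(x + y) - comp 0 (x + y) = (x - comp 0 x) + (y - comp 0 y)" by (simp add: comp_add)
    have "(x + y) - comp 0 (x + y) \<in> idl V" unfolding e1 by (rule ideal_add[OF I x' y'])
    then show "x + y \<in> T" unfolding T_def by simp
    have e2: "(x * y) - comp 0 (x * y) = (x - comp 0 x) * y + comp 0 x * (y - comp 0 y)"
      by (simp add: comp_mult algebra_simps)
    have "(x * y) - comp 0 (x * y) \<in> idl V"
      unfolding e2 by (rule ideal_add[OF I ideal_multR[OF I x'] ideal_multL[OF I y']])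
    then show "x * y \<in> T" unfolding T_def by simp
    have e3: "(- x) - comp 0 (- x) = - (x - comp 0 x)" by (simp add: comp_uminus)
    have "(- x) - comp 0 (- x) \<in> idl V" unfolding e3 by (rule ideal_uminus[OF I x'])
    then show "- x \<in> T" unfolding T_def by simp
  qed
  then have "A \<subseteq> T" unfolding alg_gen_def by (rule Inter_lower)
  moreover assume "x \<in> A"
  ultimately show ?thesis unfolding T_def by blast
qed

lemma hat_imp_phi:
  assumes "phiV_hat_injective emb V" shows "phiV_injective_morphism emb Sd V"
proof -
  have inj: "inj_on (contract_V emb V) Spec_pts" using assms unfolding phiV_hat_injective_def .
  have sub: "Proj_pts Sd \<subseteq> Spec_pts" unfolding Proj_pts_def Spec_pts_def by auto
  have "\<not> V \<subseteq> P" if P: "P \<in> Proj_pts Sd" for P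
  proof
    assume VP: "V \<subseteq> P"
    have Pp: "is_prime_ideal P" using P unfolding Proj_pts_def by blast
    then have Pi: "is_ideal P" unfolding is_prime_ideal_def by blast
    have idlP: "idl V \<subseteq> P" using idl_least[OF Pi VP] .
    define Sp where "Sp = irrelevant_ideal Sd"
    have Sp: "Sp \<in> Spec_pts" unfolding Sp_def irrelevant_ker Spec_pts_def
      using char_kernel[OF chi0_char] by simp
    have Spc: "Sp = {x. comp 0 x = 0}" unfolding Sp_def irrelevant_eq ..
    have "contract_V emb V P = contract_V emb V Sp"
      unfolding contract_V_def
    proof safe
      fix x assume x: "x \<in> P" "x \<in> A"
      obtain c where c: "comp 0 x = emb c" using comp_0_emb by blast
      have "x - emb c \<in> P" using A_minus_comp0[OF x(2)] c idlP by auto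
      then have "x - (x - emb c) \<in> P" using ideal_diff[OF Pi x(1)] by blast
      then have "emb c \<in> P" by simp
      then have "c = 0" using emb_notin_ideal[OF Pp] by blast
      then show "x \<in> Sp" unfolding Spc using c by simp
    next
      fix x assume x: "x \<in> Sp" "x \<in> A"
      then show "x \<in> P" using A_minus_comp0[OF x(2)] idlP unfolding Spc by auto
    qed
    then have "P = Sp" using inj sub P Sp by (auto simp: inj_on_def)
    then show False using P unfolding Proj_pts_def Sp_def by blast
  qed
  then show ?thesis unfolding phiV_injective_morphism_def using inj_on_subset[OF inj sub] by blast
qed

end

theorem lemma2p13:
  fixes emb :: "complex \<Rightarrow> 'a::comm_ring_1"
    and Sd :: "nat \<Rightarrow> 'a set"
    and V :: "'a set"
  assumes "fg_graded_C_algebra emb Sd"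
    and "C_subspace emb V" and "V \<subseteq> Sd 1"
  shows "phiV_injective_morphism emb Sd V \<longleftrightarrow> phiV_hat_injective emb V"
proof -
  interpret gcaV emb Sd V
    by (intro gcaV.intro gca.intro gcaV_axioms.intro assms)
  show ?thesis using phi_imp_hat hat_imp_phi by blast
qed


end
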